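(* Let $\rho>0$, $T>0$, $\theta\ge0$ and $x,y\in\mathbb{R}$. For $N\ge2$ let $(\bm\xi^{(N)},\bm\eta^{(N)})$ be the unique Nash equilibrium on the grid $\mathbb{T}_N$ with initial inventories $x,y$, as described in the context. (a) If $\theta>0$, then $$\lim_{N\uparrow\infty}\mathbb{E}\big[\mathscr{C}_{\mathbb{T}_N}(\bm\xi^{(N)}|\bm\eta^{(N)})\big]=\frac{(x+y)^2\big(36e^{6\rho T}(8\rho T+13)-60e^{3\rho T}-3\big)}{16\big(2e^{3\rho T}(3\rho T+5)-1\big)^2}+\frac{x^2-y^2}{2(\rho T+1)}+\frac{(x-y)^2}{16(\rho T+1)^2}.$$ (b) If $\theta=0$, then $$\lim_{N\uparrow\infty}\mathbb{E}\big[\mathscr{C}_{\mathbb{T}_{2N}}(\bm\xi^{(2N)}|\bm\eta^{(2N)})\big]=\frac{(x+y)^2(6e^{6\rho T}+3)}{2\big(2e^{6\rho T}(3\rho T+5)+e^{3\rho T}+3\rho T+7\big)}+\frac{x^2-y^2}{2(e^{-\rho T}+\rho T+1)}$$ and $$\lim_{N\uparrow\infty}\mathbb{E}\big[\mathscr{C}_{\mathbb{T}_{2N+1}}(\bm\xi^{(2N+1)}|\bm\eta^{(2N+1)})\big]=\frac{(x+y)^2(6e^{6\rho T}-3)}{2\big(2e^{6\rho T}(3\rho T+5)-3e^{3\rho T}-3\rho T-7\big)}+\frac{x^2-y^2}{2(-e^{-\rho T}+\rho T+1)}.$$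
   Context: Model: Let $(\Omega,(\mathscr F_t)_{t\ge0},\mathscr F,\mathbb P)$ be a filtered probability space with right-continuous filtration and $\mathbb P$-trivial $\mathscr F_0$, and let $S^0$ be a right-continuous martingale (unaffected price). Fix $\rho>0$, $T>0$, $\theta\ge0$, and for $N\ge2$ the grid $\mathbb T_N=\{t_k=kT/N: k=0,\dots,N\}$. An admissible strategy for inventory $z$ is a vector $\bm\zeta=(\zeta_0,\dots,\zeta_N)$ of bounded random variables with $\zeta_k$ $\mathscr F_{t_k}$-measurable and $\sum_k\zeta_k=z$ a.s.; denote the set by $\mathscr X(z,\mathbb T_N)$. For $\bm\xi\in\mathscr X(x,\mathbb T_N)$, $\bm\eta\in\mathscr X(y,\mathbb T_N)$ the price is $S^{\bm\xi,\bm\eta}_t=S^0_t-\sum_{t_k<t}e^{-\rho(t-t_k)}(\xi_k+\eta_k)$. With $(\varepsilon_k)$ i.i.d. Bernoulli$(1/2)$ independent of $\sigma(\bigcup_t\mathscr F_t)$, the costs are $\mathscr C_{\mathbb T_N}(\bm\xi|\bm\eta)=xS^0_0+\sum_{k=0}^N\big(\tfrac12\xi_k^2-S^{\bm\xi,\bm\eta}_{t_k}\xi_k+\varepsilon_k\xi_k\eta_k+\theta\xi_k^2\big)$ and $\mathscr C_{\mathbb T_N}(\bm\eta|\bm\xi)=yS^0_0+\sum_{k=0}^N\big(\tfrac12\eta_k^2-S^{\bm\xi,\bm\eta}_{t_k}\eta_k+(1-\varepsilon_k)\xi_k\eta_k+\theta\eta_k^2\big)$. A Nash equilibrium is a pair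 $(\bm\xi^*,\bm\eta^* )\in\mathscr X(x,\mathbb T_N)\times\mathscr X(y,\mathbb T_N)$ such that $\bm\xi^*$ minimizes $\mathbb E[\mathscr C_{\mathbb T_N}(\cdot|\bm\eta^* )]$ over $\mathscr X(x,\mathbb T_N)$ and $\bm\eta^*$ minimizes $\mathbb E[\mathscr C_{\mathbb T_N}(\cdot|\bm\xi^* )]$ over $\mathscr X(y,\mathbb T_N)$. It is known that there is a unique Nash equilibrium, given by the deterministic vectors $\bm\xi^{(N)}=\frac12(x+y)\bm v+\frac12(x-y)\bm w$ and $\bm\eta^{(N)}=\frac12(x+y)\bm v-\frac12(x-y)\bm w$, where: $\tilde\Gamma$ is the $(N+1)\times(N+1)$ lower triangular matrix with $\tilde\Gamma_{ij}=0$ ($i<j$), $1/2$ ($i=j$), $e^{-\rho(i-j)T/N}$ ($i>j$); $\Gamma=\tilde\Gamma+\tilde\Gamma^\top$; $\bm\nu=(\Gamma+\tilde\Gamma+2\theta\mathrm{Id})^{-1}\mathbf1$, $\bm\omega=(\Gamma-\tilde\Gamma+2\theta\mathrm{Id})^{-1}\mathbf1$; $\bm v=\bm\nu/(\mathbf1^\top\bm\nu)$, $\bm w=\bm\omega/(\mathbf1^\top\bm\omega)$. *)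

theory Defs
  imports Complex_Main
begin

text \<open>Vectors/matrices of size (N+1) are represented as functions on nat, indices 0..N.\<close>

definition gtil :: "real \<Rightarrow> real \<Rightarrow> nat \<Rightarrow> nat \<Rightarrow> nat \<Rightarrow> real" where
  "gtil \<rho> T N i j = (if i < j then 0 else if i = j then 1/2
      else exp (- \<rho> * real (i - j) * T / real N))"

definition Gam :: "real \<Rightarrow> real \<Rightarrow> nat \<Rightarrow> nat \<Rightarrow> nat \<Rightarrow> real" where
  "Gam \<rho> T N i j = gtil \<rho> T N i j + gtil \<rho> T N j i"

definition inv_apply_ones :: "nat \<Rightarrow> (nat \<Rightarrow> nat \<Rightarrow> real) \<Rightarrow> (nat \<Rightarrow> real)" where
  "inv_apply_ones N A = (THE v. (\<forall>i>N. v i = 0) \<and> (\<forall>i\<le>N. (\<Sum>j\<le>N. A i j * v j) = 1))"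

definition nu_vec :: "real \<Rightarrow> real \<Rightarrow> real \<Rightarrow> nat \<Rightarrow> nat \<Rightarrow> real" where
  "nu_vec \<rho> T \<theta> N = inv_apply_ones N
     (\<lambda>i j. Gam \<rho> T N i j + gtil \<rho> T N i j + (if i = j then 2 * \<theta> else 0))"

definition omega_vec :: "real \<Rightarrow> real \<Rightarrow> real \<Rightarrow> nat \<Rightarrow> nat \<Rightarrow> real" where
  "omega_vec \<rho> T \<theta> N = inv_apply_ones N
     (\<lambda>i j. Gam \<rho> T N i j - gtil \<rho> T N i j + (if i = j then 2 * \<theta> else 0))"

definition v_vec :: "real \<Rightarrow> real \<Rightarrow> real \<Rightarrow> nat \<Rightarrow> nat \<Rightarrow> real" where
  "v_vec \<rho> T \<theta> N k = nu_vec \<rho> T \<theta> N k / (\<Sum>j\<le>N. nu_vec \<rho> T \<theta> N j)"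

definition w_vec :: "real \<Rightarrow> real \<Rightarrow> real \<Rightarrow> nat \<Rightarrow> nat \<Rightarrow> real" where
  "w_vec \<rho> T \<theta> N k = omega_vec \<rho> T \<theta> N k / (\<Sum>j\<le>N. omega_vec \<rho> T \<theta> N j)"

text \<open>The (unique) Nash equilibrium on the grid T_N with inventories x, y.\<close>
definition xiN :: "real \<Rightarrow> real \<Rightarrow> real \<Rightarrow> real \<Rightarrow> real \<Rightarrow> nat \<Rightarrow> nat \<Rightarrow> real" where
  "xiN \<rho> T \<theta> x y N k = (x + y) / 2 * v_vec \<rho> T \<theta> N k + (x - y) / 2 * w_vec \<rho> T \<theta> N k"

definition etaN :: "real \<Rightarrow> real \<Rightarrow> real \<Rightarrow> real \<Rightarrow> real \<Rightarrow> nat \<Rightarrow> nat \<Rightarrow> real" where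
  "etaN \<rho> T \<theta> x y N k = (x + y) / 2 * v_vec \<rho> T \<theta> N k - (x - y) / 2 * w_vec \<rho> T \<theta> N k"

text \<open>Expected cost E[C_{T_N}(xi|eta)] for DETERMINISTIC strategies xi (inventory x), eta.
  Here s0 = S^0_0; since S^0 is a martingale and F_0 is trivial, E[S^0_t] = s0, and
  E[eps_k] = 1/2 by independence, so
  E[S^{xi,eta}_{t_k}] = s0 - sum_{j<k} exp(-rho (t_k - t_j)) (xi_j + eta_j).\<close>
definition exp_cost ::
  "real \<Rightarrow> real \<Rightarrow> real \<Rightarrow> nat \<Rightarrow> real \<Rightarrow> real \<Rightarrow> (nat \<Rightarrow> real) \<Rightarrow> (nat \<Rightarrow> real) \<Rightarrow> real" where
  "exp_cost \<rho> T \<theta> N s0 x \<xi> \<eta> =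
     x * s0 + (\<Sum>k\<le>N.
        1/2 * (\<xi> k)^2
      - (s0 - (\<Sum>j<k. exp (- \<rho> * (real k * T / real N - real j * T / real N)) * (\<xi> j + \<eta> j))) * \<xi> k
      + 1/2 * \<xi> k * \<eta> k
      + \<theta> * (\<xi> k)^2)"

definition eq_cost :: "real \<Rightarrow> real \<Rightarrow> real \<Rightarrow> real \<Rightarrow> real \<Rightarrow> real \<Rightarrow> nat \<Rightarrow> real" where
  "eq_cost \<rho> T \<theta> s0 x y N =
     exp_cost \<rho> T \<theta> N s0 x (xiN \<rho> T \<theta> x y N) (etaN \<rho> T \<theta> x y N)"

end

theory Submission
  imports Defs "HOL-Real_Asymp.Real_Asymp"
begin

definition gt :: "real \<Rightarrow> nat \<Rightarrow> nat \<Rightarrow> real" where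
  "gt a i j = (if i < j then 0 else if i = j then 1/2 else a ^ (i - j))"

lemma gtil_eq: assumes "N > 0"
  shows "gtil \<rho> T N i j = gt (exp (- \<rho> * T / real N)) i j"
proof -
  have e: "exp (- \<rho> * real n * T / real N) = exp (- \<rho> * T / real N) ^ n" for n
    by (subst exp_of_nat_mult[symmetric]) (simp add: field_simps)
  show ?thesis unfolding gtil_def gt_def using e[of "i-j"] by (simp del: of_nat_diff)
qed

definition Pf :: "real \<Rightarrow> (nat \<Rightarrow> real) \<Rightarrow> nat \<Rightarrow> real" where
  "Pf a u k = (\<Sum>j\<le>k. a^(k-j) * u j)"

lemma Pf_0: "Pf a u 0 = u 0" unfolding Pf_def by simp

lemma Pf_Suc: "Pf a u (Suc k) = a * Pf a u k + u (Suc k)"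
proof -
  have "Pf a u (Suc k) = (\<Sum>j\<le>k. a^(Suc k-j) * u j) + u (Suc k)"
    unfolding Pf_def by simp
  also have "(\<Sum>j\<le>k. a^(Suc k-j) * u j) = a * Pf a u k"
    unfolding Pf_def sum_distrib_left
    by (rule sum.cong) (auto simp: Suc_diff_le)
  finally show ?thesis by simp
qed

lemma row_gt: assumes "i \<le> N"
  shows "(\<Sum>j\<le>N. gt a i j * u j) = Pf a u i - u i / 2"
proof -
  have "(\<Sum>j\<le>N. gt a i j * u j) = (\<Sum>j\<le>i. gt a i j * u j)"
    by (rule sum.mono_neutral_right) (use assms in \<open>auto simp: gt_def\<close>)
  also have "\<dots> = (\<Sum>j<i. gt a i j * u j) + u i / 2"
    by (simp add: lessThan_Suc_atMost[symmetric] gt_def)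
  also have "(\<Sum>j<i. gt a i j * u j) = (\<Sum>j<i. a^(i-j) * u j)"
    by (rule sum.cong) (auto simp: gt_def)
  also have "Pf a u i = (\<Sum>j<i. a^(i-j) * u j) + u i"
    unfolding Pf_def by (simp add: lessThan_Suc_atMost[symmetric])
  ultimately show ?thesis by simp
qed

lemma QF_aux: "(\<Sum>i\<le>N. u i * (Pf a u i - u i / 2)) = (Pf a u N ^2 + (1 - a^2) * (\<Sum>k<N. Pf a u k ^2)) / 2"
proof (induction N)
  case 0 then show ?case by (simp add: Pf_0 power2_eq_square)
next
  case (Suc N)
  have "(\<Sum>i\<le>Suc N. u i * (Pf a u i - u i / 2)) = (Pf a u N ^2 + (1 - a^2) * (\<Sum>k<N. Pf a u k ^2)) / 2
     + u (Suc N) * (Pf a u (Suc N) - u (Suc N) / 2)" using Suc by simp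
  also have "u (Suc N) = Pf a u (Suc N) - a * Pf a u N" by (simp add: Pf_Suc)
  finally show ?case by (simp add: algebra_simps power2_eq_square add_divide_distrib diff_divide_distrib)
qed

lemma QF: "(\<Sum>i\<le>N. u i * (\<Sum>j\<le>N. gt a i j * u j)) = (Pf a u N ^2 + (1 - a^2) * (\<Sum>k<N. Pf a u k ^2)) / 2"
  by (subst QF_aux[symmetric]) (rule sum.cong, auto simp: row_gt)

lemma QF_pos:
  assumes "0 < a" "a < 1" "(\<Sum>i\<le>N. u i * (\<Sum>j\<le>N. gt a i j * u j)) \<le> 0"
  shows "\<forall>i\<le>N. u i = 0"
proof -
  have a2: "0 < 1 - a^2" using assms by (simp add: power_less_one_iff abs_if)
  have s: "0 \<le> (\<Sum>k<N. Pf a u k ^2)" by (simp add: sum_nonneg)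
  have le: "Pf a u N ^2 + (1 - a^2) * (\<Sum>k<N. Pf a u k ^2) \<le> 0" using assms(3) QF[where N=N and u=u and a=a] by simp
  have t2: "0 \<le> (1 - a^2) * (\<Sum>k<N. Pf a u k ^2)" using a2 s by simp
  have t1: "0 \<le> Pf a u N ^2" by simp
  have h1: "Pf a u N ^2 = 0" using le t1 t2 by linarith
  have h2: "(1 - a^2) * (\<Sum>k<N. Pf a u k ^2) = 0" using le t1 t2 by linarith
  then have "(\<Sum>k<N. Pf a u k ^2) = 0" using a2 by simp
  then have "\<forall>k<N. Pf a u k ^2 = 0" by (subst (asm) sum_nonneg_eq_0_iff) auto
  then have P0: "\<forall>k\<le>N. Pf a u k = 0" using h1 by (auto simp: le_less)
  show ?thesis
  proof (intro allI impI)
    fix i assume "i \<le> N"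
    show "u i = 0"
    proof (cases i)
      case 0 then show ?thesis using P0 Pf_0[of a u] by auto
    next
      case (Suc k) then show ?thesis using P0 \<open>i \<le> N\<close> Pf_Suc[of a u k] by simp
    qed
  qed
qed

definition Mat :: "real \<Rightarrow> real \<Rightarrow> real \<Rightarrow> real \<Rightarrow> nat \<Rightarrow> nat \<Rightarrow> real" where
  "Mat a al be t i j = al * gt a i j + be * gt a j i + (if i = j then t else 0)"

lemma Mat_QF:
  "(\<Sum>i\<le>N. u i * (\<Sum>j\<le>N. Mat a al be t i j * u j)) =
    (al + be) * (\<Sum>i\<le>N. u i * (\<Sum>j\<le>N. gt a i j * u j)) + t * (\<Sum>i\<le>N. u i ^ 2)"
proof -
  have sw: "(\<Sum>i\<le>N. u i * (\<Sum>j\<le>N. gt a j i * u j)) = (\<Sum>i\<le>N. u i * (\<Sum>j\<le>N. gt a i j * u j))"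
    unfolding sum_distrib_left by (subst sum.swap) (simp add: mult_ac)
  have d: "\<And>i. i \<le> N \<Longrightarrow> (\<Sum>j\<le>N. (if i = j then t else 0) * u j) = t * u i"
  proof -
    fix i assume "i \<le> N"
    have "(\<Sum>j\<le>N. (if i = j then t else 0) * u j) = (\<Sum>j\<le>N. if j = i then t * u j else 0)"
      by (rule sum.cong) auto
    then show "(\<Sum>j\<le>N. (if i = j then t else 0) * u j) = t * u i" using \<open>i \<le> N\<close> by simp
  qed
  have "(\<Sum>i\<le>N. u i * (\<Sum>j\<le>N. Mat a al be t i j * u j)) =
     al * (\<Sum>i\<le>N. u i * (\<Sum>j\<le>N. gt a i j * u j)) + be * (\<Sum>i\<le>N. u i * (\<Sum>j\<le>N. gt a j i * u j))
     + (\<Sum>i\<le>N. u i * (\<Sum>j\<le>N. (if i = j then t else 0) * u j))"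
    unfolding Mat_def by (simp add: algebra_simps sum.distrib sum_distrib_left)
  also have "(\<Sum>i\<le>N. u i * (\<Sum>j\<le>N. (if i = j then t else 0) * u j)) = (\<Sum>i\<le>N. u i * (t * u i))"
    by (rule sum.cong[OF refl]) (simp add: d)
  also have "\<dots> = t * (\<Sum>i\<le>N. u i ^ 2)" by (simp add: sum_distrib_left power2_eq_square mult_ac)
  finally show ?thesis using sw by (simp add: algebra_simps)
qed

lemma Mat_unique:
  assumes "0 < a" "a < 1" "0 \<le> al" "0 \<le> be" "0 < al + be" "0 \<le> t"
    and "\<forall>i>N. v i = 0" "\<forall>i\<le>N. (\<Sum>j\<le>N. Mat a al be t i j * v j) = 1"
  shows "inv_apply_ones N (Mat a al be t) = v"
  unfolding inv_apply_ones_def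
proof (rule the_equality)
  show "(\<forall>i>N. v i = 0) \<and> (\<forall>i\<le>N. (\<Sum>j\<le>N. Mat a al be t i j * v j) = 1)" using assms by blast
next
  fix w assume w: "(\<forall>i>N. w i = 0) \<and> (\<forall>i\<le>N. (\<Sum>j\<le>N. Mat a al be t i j * w j) = 1)"
  define u where "u = (\<lambda>i. w i - v i)"
  have Mu: "\<forall>i\<le>N. (\<Sum>j\<le>N. Mat a al be t i j * u j) = 0"
    using w assms(8) by (simp add: u_def right_diff_distrib sum_subtractf)
  have "(\<Sum>i\<le>N. u i * (\<Sum>j\<le>N. Mat a al be t i j * u j)) = 0" using Mu by simp
  then have "(al + be) * (\<Sum>i\<le>N. u i * (\<Sum>j\<le>N. gt a i j * u j)) \<le> 0"
    using Mat_QF[where N=N and u=u and a=a and al=al and be=be and t=t] assms(6) by (smt (verit) mult_nonneg_nonneg sum_nonneg zero_le_power2)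
  then have "(\<Sum>i\<le>N. u i * (\<Sum>j\<le>N. gt a i j * u j)) \<le> 0" using assms(5)
    by (simp add: mult_le_0_iff)
  then have "\<forall>i\<le>N. u i = 0" using QF_pos assms(1,2) by blast
  then show "w = v" using w assms(7) unfolding u_def by (metis eq_iff_diff_eq_0 not_le ext)
qed


definition Lo :: "real \<Rightarrow> (nat \<Rightarrow> real) \<Rightarrow> nat \<Rightarrow> real" where
  "Lo a w i = (\<Sum>j<i. a^(i-j) * w j)"
definition Up :: "real \<Rightarrow> nat \<Rightarrow> (nat \<Rightarrow> real) \<Rightarrow> nat \<Rightarrow> real" where
  "Up a N w i = (\<Sum>j\<in>{i<..N}. a^(j-i) * w j)"

lemma sum_split3:
  fixes f :: "nat \<Rightarrow> real"
  assumes "i \<le> N"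
  shows "(\<Sum>j\<le>N. f j) = (\<Sum>j<i. f j) + f i + (\<Sum>j\<in>{i<..N}. f j)"
proof -
  have e: "{..N} = {..<i} \<union> ({i} \<union> {i<..N})" using assms by auto
  have "(\<Sum>j\<in>{..<i} \<union> ({i} \<union> {i<..N}). f j) = (\<Sum>j<i. f j) + (\<Sum>j\<in>{i} \<union> {i<..N}. f j)"
    by (rule sum.union_disjoint) auto
  also have "(\<Sum>j\<in>{i} \<union> {i<..N}. f j) = f i + (\<Sum>j\<in>{i<..N}. f j)"
    by (subst sum.union_disjoint) auto
  finally show ?thesis unfolding e by simp
qed

lemma row_split:
  assumes "i \<le> N"
  shows "(\<Sum>j\<le>N. Mat a al be t i j * w j) = al * Lo a w i + (al/2 + be/2 + t) * w i + be * Up a N w i"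
proof -
  have "(\<Sum>j<i. Mat a al be t i j * w j) = al * Lo a w i"
    unfolding Lo_def sum_distrib_left by (rule sum.cong) (auto simp: Mat_def gt_def)
  moreover have "(\<Sum>j\<in>{i<..N}. Mat a al be t i j * w j) = be * Up a N w i"
    unfolding Up_def sum_distrib_left by (rule sum.cong) (auto simp: Mat_def gt_def)
  moreover have "Mat a al be t i i * w i = (al/2 + be/2 + t) * w i"
    by (simp add: Mat_def gt_def algebra_simps)
  ultimately show ?thesis using sum_split3[OF assms, of "\<lambda>j. Mat a al be t i j * w j"] by simp
qed

lemma Lo_Suc: "Lo a w (Suc i) = a * (Lo a w i + w i)"
proof -
  have "Lo a w (Suc i) = (\<Sum>j<i. a^(Suc i-j) * w j) + a * w i" unfolding Lo_def by simp
  also have "(\<Sum>j<i. a^(Suc i-j) * w j) = a * Lo a w i"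
    unfolding Lo_def sum_distrib_left by (rule sum.cong) (auto simp: Suc_diff_le)
  finally show ?thesis by (simp add: algebra_simps)
qed

lemma Up_N: "Up a N w N = 0" unfolding Up_def by simp

lemma Up_step: assumes "i < N" shows "Up a N w i = a * (w (Suc i) + Up a N w (Suc i))"
proof -
  have e: "{i<..N} = insert (Suc i) {Suc i<..N}" using assms by auto
  have "Up a N w i = a * w (Suc i) + (\<Sum>j\<in>{Suc i<..N}. a^(j-i) * w j)"
    unfolding Up_def e by simp
  also have "(\<Sum>j\<in>{Suc i<..N}. a^(j-i) * w j) = a * Up a N w (Suc i)"
    unfolding Up_def sum_distrib_left
    by (rule sum.cong) (auto simp: Suc_diff_Suc power_Suc[symmetric] simp del: power_Suc)
  finally show ?thesis by (simp add: algebra_simps)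
qed

lemma Lo_lin: "Lo a (\<lambda>j. p * f j + q * g j) i = p * Lo a f i + q * Lo a g i"
  unfolding Lo_def by (simp add: algebra_simps sum.distrib sum_distrib_left)
lemma Up_lin: "Up a N (\<lambda>j. p * f j + q * g j) i = p * Up a N f i + q * Up a N g i"
  unfolding Up_def by (simp add: algebra_simps sum.distrib sum_distrib_left)

lemma Lo_geom: assumes "r \<noteq> a" shows "Lo a (\<lambda>j. r^j) i = a * (r^i - a^i) / (r - a)"
proof (induction i)
  case 0 then show ?case by (simp add: Lo_def)
next
  case (Suc i)
  have ne: "r - a \<noteq> 0" using assms by simp
  show ?case unfolding Lo_Suc Suc using ne by (simp add: field_simps)
qed

lemma Up_geom:
  assumes "a * r \<noteq> 1" "i \<le> N"
  shows "Up a N (\<lambda>j. r^j) i = (a * r^(i+1) - a^(N-i+1) * r^(N+1)) / (1 - a * r)"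
proof -
  have ne: "1 - a * r \<noteq> 0" using assms by simp
  have "\<forall>i. i + m = N \<longrightarrow> Up a N (\<lambda>j. r^j) i = (a * r^(i+1) - a^(N-i+1) * r^(N+1)) / (1 - a * r)" for m
  proof (induction m)
    case 0 then show ?case using ne by (auto simp: Up_N)
  next
    case (Suc m)
    show ?case
    proof (intro allI impI)
      fix i assume h: "i + Suc m = N"
      then have iN: "i < N" by simp
      have IH: "Up a N (\<lambda>j. r^j) (Suc i) = (a * r^(Suc i+1) - a^(N-Suc i+1) * r^(N+1)) / (1 - a * r)"
        using Suc.IH h by auto
      have e: "N - i + 1 = Suc (N - Suc i + 1)" using iN by simp
      show "Up a N (\<lambda>j. r^j) i = (a * r^(i+1) - a^(N-i+1) * r^(N+1)) / (1 - a * r)"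
        unfolding Up_step[OF iN] IH e using ne by (simp add: field_simps)
    qed
  qed
  then show ?thesis using assms(2) by (metis le_add_diff_inverse)
qed


definition ws :: "real \<Rightarrow> real \<Rightarrow> real" where "ws a c = (1 - a) / (c + a * (1 - c))"
definition qq :: "real \<Rightarrow> real \<Rightarrow> real" where "qq a c = a * (c - 1) / c"
definition gam :: "real \<Rightarrow> real \<Rightarrow> real" where "gam a c = 1 / c - ws a c"
definition omv :: "real \<Rightarrow> real \<Rightarrow> nat \<Rightarrow> nat \<Rightarrow> real" where
  "omv a c N k = (if k \<le> N then ws a c + gam a c * qq a c ^ (N - k) else 0)"

lemma ws_den_pos: fixes a c :: real assumes "0 < a" "a < 1" "1/2 \<le> c" shows "0 < c + a * (1 - c)"
proof -
  have "c + a * (1 - c) = c * (1 - a) + a" by (simp add: algebra_simps)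
  moreover have "0 \<le> c * (1 - a)" using assms by simp
  ultimately show ?thesis using assms by linarith
qed

lemma om_rec:
  fixes a c :: real
  assumes "0 < a" "a < 1" "1/2 \<le> c" "k < N"
  shows "c * omv a c N k + a * (1 - c) * omv a c N (Suc k) = 1 - a"
proof -
  have d: "c + a * (1 - c) \<noteq> 0" using ws_den_pos[OF assms(1-3)] by simp
  have c0: "c \<noteq> 0" using assms by simp
  have e: "N - k = Suc (N - Suc k)" using assms by simp
  have q: "c * qq a c + a * (1 - c) = 0" unfolding qq_def using c0 by (simp add: field_simps)
  have w: "ws a c * (c + a * (1 - c)) = 1 - a" unfolding ws_def using d by simp
  have "c * omv a c N k + a * (1 - c) * omv a c N (Suc k)
     = ws a c * (c + a * (1 - c)) + gam a c * qq a c ^ (N - Suc k) * (c * qq a c + a * (1 - c))"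
    unfolding omv_def e using assms by (simp add: algebra_simps)
  then show ?thesis unfolding q w by simp
qed

lemma om_sys:
  fixes a c :: real
  assumes "0 < a" "a < 1" "1/2 \<le> c" "i \<le> N"
  shows "(\<Sum>j\<le>N. Mat a 0 1 (c - 1/2) i j * omv a c N j) = 1"
proof -
  have "\<forall>i. i + m = N \<longrightarrow> c * omv a c N i + Up a N (omv a c N) i = 1" for m
  proof (induction m)
    case 0 then show ?case using assms by (auto simp: Up_N omv_def gam_def)
  next
    case (Suc m)
    show ?case
    proof (intro allI impI)
      fix i assume h: "i + Suc m = N"
      then have iN: "i < N" by simp
      have IH: "c * omv a c N (Suc i) + Up a N (omv a c N) (Suc i) = 1" using Suc.IH h by auto
      have "c * omv a c N i + Up a N (omv a c N) i
          = (c * omv a c N i + a * (1 - c) * omv a c N (Suc i)) + a * (c * omv a c N (Suc i) + Up a N (omv a c N) (Suc i))"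
        unfolding Up_step[OF iN] by (simp add: algebra_simps)
      also have "\<dots> = 1" unfolding IH om_rec[OF assms(1-3) iN] by simp
      finally show "c * omv a c N i + Up a N (omv a c N) i = 1" .
    qed
  qed
  then have "c * omv a c N i + Up a N (omv a c N) i = 1" using assms(4) by (metis le_add_diff_inverse)
  then show ?thesis unfolding row_split[OF assms(4)] by simp
qed

definition Bq :: "real \<Rightarrow> real \<Rightarrow> real" where "Bq a c = c + 1 + (c - 2) * a^2"
definition Dq :: "real \<Rightarrow> real \<Rightarrow> real" where "Dq a c = Bq a c ^ 2 - 4 * a^2 * c * (c - 1)"
definition r1 :: "real \<Rightarrow> real \<Rightarrow> real" where "r1 a c = (Bq a c + sqrt (Dq a c)) / (2 * a * c)"
definition r2 :: "real \<Rightarrow> real \<Rightarrow> real" where "r2 a c = (Bq a c - sqrt (Dq a c)) / (2 * a * c)"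
definition Pq :: "real \<Rightarrow> real \<Rightarrow> real \<Rightarrow> real" where "Pq a c x = - a * c * x^2 + Bq a c * x + a * (1 - c)"
definition chi :: "real \<Rightarrow> real \<Rightarrow> real \<Rightarrow> real" where
  "chi a c r = 2 * a / (r - a) + (c + 1) + a * r / (1 - a * r)"
definition Kc :: "real \<Rightarrow> real \<Rightarrow> real" where "Kc a c = 1 / (c * (1 - a) + 1 + 2 * a)"
definition C0 :: "real \<Rightarrow> real \<Rightarrow> real" where "C0 a c = (1 - a) * Kc a c"
definition u1 :: "real \<Rightarrow> real \<Rightarrow> real" where "u1 a c = 1 / (r1 a c - a)"
definition u2 :: "real \<Rightarrow> real \<Rightarrow> real" where "u2 a c = 1 / (r2 a c - a)"
definition w1 :: "real \<Rightarrow> real \<Rightarrow> nat \<Rightarrow> real" where "w1 a c N = r1 a c ^ (N+1) / (1 - a * r1 a c)"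
definition w2 :: "real \<Rightarrow> real \<Rightarrow> nat \<Rightarrow> real" where "w2 a c N = r2 a c ^ (N+1) / (1 - a * r2 a c)"
definition dt :: "real \<Rightarrow> real \<Rightarrow> nat \<Rightarrow> real" where "dt a c N = u1 a c * w2 a c N - u2 a c * w1 a c N"
definition alp :: "real \<Rightarrow> real \<Rightarrow> nat \<Rightarrow> real" where "alp a c N = Kc a c * (u2 a c - w2 a c N) / dt a c N"
definition bet :: "real \<Rightarrow> real \<Rightarrow> nat \<Rightarrow> real" where "bet a c N = Kc a c * (w1 a c N - u1 a c) / dt a c N"
definition nuf :: "real \<Rightarrow> real \<Rightarrow> nat \<Rightarrow> nat \<Rightarrow> real" where
  "nuf a c N k = C0 a c + alp a c N * r1 a c ^ k + bet a c N * r2 a c ^ k"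
definition nuv :: "real \<Rightarrow> real \<Rightarrow> nat \<Rightarrow> nat \<Rightarrow> real" where
  "nuv a c N k = (if k \<le> N then nuf a c N k else 0)"

lemma Pq_id: "4 * a * c * Pq a c x = Dq a c - (Bq a c - 2 * a * c * x)^2"
  unfolding Pq_def Dq_def by (simp add: algebra_simps power2_eq_square)

lemma Pq_a: "Pq a c a = 2 * a * (1 - a^2)"
  unfolding Pq_def Bq_def by (simp add: algebra_simps power2_eq_square power3_eq_cube)

lemma Pq_inv: assumes "a \<noteq> 0" shows "Pq a c (1/a) = 1/a - a"
  unfolding Pq_def Bq_def using assms by (simp add: field_simps power2_eq_square)

context
  fixes a c :: real
  assumes a0: "0 < a" and a1: "a < 1" and c0: "1/2 \<le> c"
begin

lemma cpos: "0 < c" using c0 by simp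

lemma Pq_a_pos: "0 < Pq a c a"
proof -
  have "a^2 < 1" using a0 a1 by (simp add: power_less_one_iff abs_if)
  then show ?thesis unfolding Pq_a using a0 by simp
qed

lemma Pq_inv_pos: "0 < Pq a c (1/a)"
proof -
  have "a * a < a * 1" using a0 a1 by (intro mult_strict_left_mono) auto
  then have "a * a < 1" using a1 by simp
  then have "a < 1/a" using a0 by (simp add: field_simps)
  then show ?thesis unfolding Pq_inv[OF less_imp_neq[OF a0, symmetric]] by simp
qed

lemma Dq_pos: "0 < Dq a c"
proof -
  have "0 < 4 * a * c * Pq a c a" using a0 cpos Pq_a_pos by simp
  then show ?thesis using Pq_id[of a c a] by (smt (verit) zero_le_power2)
qed

lemma between:
  assumes "0 < Pq a c x" shows "r2 a c < x" "x < r1 a c"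
proof -
  have "0 < 4 * a * c * Pq a c x" using a0 cpos assms by simp
  then have "(Bq a c - 2 * a * c * x)^2 < sqrt (Dq a c) ^ 2" using Pq_id[of a c x] Dq_pos by simp
  then have h: "\<bar>Bq a c - 2 * a * c * x\<bar> < sqrt (Dq a c)" using real_sqrt_ge_zero Dq_pos
    by (metis abs_le_square_iff abs_of_nonneg less_le not_less order.refl)
  have p: "0 < 2 * a * c" using a0 cpos by simp
  from h have "Bq a c - sqrt (Dq a c) < 2 * a * c * x" "2 * a * c * x < Bq a c + sqrt (Dq a c)" by linarith+
  then show "r2 a c < x" "x < r1 a c" unfolding r1_def r2_def using p by (simp_all add: field_simps)
qed

lemma r2_lt_a: "r2 a c < a" using between(1)[OF Pq_a_pos] .
lemma r1_gt_inv: "1/a < r1 a c" using between(2)[OF Pq_inv_pos] .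
lemma r1_gt1: "1 < r1 a c" using r1_gt_inv a0 a1 by (smt (verit) le_divide_eq_1_pos)
lemma ar1_gt1: "1 < a * r1 a c" using r1_gt_inv a0 by (simp add: field_simps)
lemma r1_gt_a: "a < r1 a c" using r1_gt1 a1 by simp

lemma r1r2: "r1 a c * r2 a c = (c - 1) / c"
proof -
  have s: "sqrt (Dq a c) ^ 2 = Dq a c" using Dq_pos by simp
  have "r1 a c * r2 a c = ((Bq a c + sqrt (Dq a c)) * (Bq a c - sqrt (Dq a c))) / ((2 * a * c) * (2 * a * c))"
    unfolding r1_def r2_def by simp
  also have "(Bq a c + sqrt (Dq a c)) * (Bq a c - sqrt (Dq a c)) = Bq a c ^ 2 - sqrt (Dq a c) ^ 2"
    by (simp add: algebra_simps power2_eq_square)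
  also have "\<dots> = 4 * a^2 * c * (c - 1)" by (subst s) (simp add: Dq_def)
  also have "4 * a^2 * c * (c - 1) / ((2 * a * c) * (2 * a * c)) = (c - 1) / c"
    using a0 cpos by (simp add: field_simps power2_eq_square)
  finally show ?thesis .
qed

lemma Pq_root1: "Pq a c (r1 a c) = 0"
proof -
  have s: "sqrt (Dq a c) ^ 2 = Dq a c" using Dq_pos by simp
  have "4 * a * c * Pq a c (r1 a c) = 0" unfolding Pq_id r1_def using a0 cpos s
    by (simp add: field_simps power2_eq_square)
  then show ?thesis using a0 cpos by simp
qed

lemma Pq_root2: "Pq a c (r2 a c) = 0"
proof -
  have s: "sqrt (Dq a c) ^ 2 = Dq a c" using Dq_pos by simp
  have "4 * a * c * Pq a c (r2 a c) = 0" unfolding Pq_id r2_def using a0 cpos s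
    by (simp add: field_simps power2_eq_square)
  then show ?thesis using a0 cpos by simp
qed

lemma abs_r2_lt1: "\<bar>r2 a c\<bar> < 1"
proof -
  have "\<bar>r2 a c\<bar> * r1 a c = \<bar>c - 1\<bar> / c" using r1r2 r1_gt1 cpos
    by (metis abs_divide abs_mult abs_of_pos mult.commute zero_less_one order.strict_trans)
  also have "\<dots> \<le> 1" using c0 cpos by (simp add: abs_if field_simps)
  finally have "\<bar>r2 a c\<bar> * r1 a c \<le> 1" .
  then show ?thesis using r1_gt1 by (smt (verit) mult_le_cancel_left1 abs_ge_zero mult.commute)
qed

lemma ar2_lt1: "a * r2 a c < 1"
proof -
  have "a * r2 a c \<le> a * \<bar>r2 a c\<bar>" using a0 by (simp add: mult_left_mono)
  also have "\<dots> < 1 * 1" using a0 a1 abs_r2_lt1 by (intro mult_strict_mono) auto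
  finally show ?thesis by simp
qed

lemma chi_eq: assumes "r \<noteq> a" "a * r \<noteq> 1"
  shows "chi a c r = Pq a c r / ((r - a) * (1 - a * r))"
  using assms unfolding chi_def Pq_def Bq_def by (simp add: field_simps power2_eq_square)

lemma chi_r1: "chi a c (r1 a c) = 0"
  using chi_eq[of "r1 a c"] r1_gt_a ar1_gt1 Pq_root1 by simp
lemma chi_r2: "chi a c (r2 a c) = 0"
  using chi_eq[of "r2 a c"] r2_lt_a ar2_lt1 Pq_root2 by simp

lemma chi_1: "C0 a c * chi a c 1 = 1"
proof -
  have "0 < c * (1 - a) + 1 + 2 * a" using a0 a1 cpos by (simp add: add_pos_pos)
  then have ne: "c * (1 - a) + 1 + 2 * a \<noteq> 0" by simp
  have ne1: "1 - a \<noteq> 0" using a1 by simp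
  have "chi a c 1 * (1 - a) = 2 * a / (1 - a) * (1 - a) + (c + 1) * (1 - a) + a / (1 - a) * (1 - a)"
    unfolding chi_def by (simp only: distrib_right mult_1_right)
  also have "\<dots> = 2 * a + (c + 1) * (1 - a) + a" using ne1 by simp
  also have "\<dots> = c * (1 - a) + 1 + 2 * a" by (simp add: algebra_simps)
  finally have "chi a c 1 * (1 - a) = c * (1 - a) + 1 + 2 * a" .
  then show ?thesis unfolding C0_def Kc_def using ne ne1 by (simp add: field_simps)
qed

lemma rowm:
  assumes "r \<noteq> a" "a * r \<noteq> 1" "i \<le> N"
  shows "(\<Sum>j\<le>N. Mat a 2 1 (c - 1/2) i j * r^j)
     = r^i * chi a c r - 2 * a^(i+1) * (1 / (r - a)) - a^(N-i+1) * (r^(N+1) / (1 - a * r))"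
proof -
  have ne1: "r - a \<noteq> 0" and ne2: "1 - a * r \<noteq> 0" using assms by auto
  have t0: "2 * (a * (r^i - a^i) / (r - a)) = (2 * a * r^i - 2 * a^(i+1)) / (r - a)"
    by (simp add: algebra_simps)
  have t1: "2 * (a * (r^i - a^i) / (r - a)) = r^i * (2 * a / (r - a)) - 2 * a^(i+1) * (1 / (r - a))"
    unfolding t0 by (simp add: diff_divide_distrib)
  have t2: "(a * r^(i+1) - a^(N-i+1) * r^(N+1)) / (1 - a * r) = r^i * (a * r / (1 - a * r)) - a^(N-i+1) * (r^(N+1) / (1 - a * r))"
    by (simp add: diff_divide_distrib mult_ac)
  show ?thesis unfolding row_split[OF assms(3)] Lo_geom[OF assms(1)] Up_geom[OF assms(2,3)] chi_def
    using t1 t2 by (simp add: algebra_simps)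
qed

lemma dt_neg: "dt a c N < 0"
proof -
  have p1: "0 < r1 a c - a" using r1_gt_a by simp
  have p2: "0 < a - r2 a c" using r2_lt_a by simp
  have p3: "0 < a * r1 a c - 1" using ar1_gt1 by simp
  have p4: "0 < 1 - a * r2 a c" using ar2_lt1 by simp
  have pw: "\<bar>r2 a c\<bar> ^ (N+1) < r1 a c ^ (N+1)"
    using abs_r2_lt1 r1_gt1 by (intro power_strict_mono) auto
  have ineq: "(a - r2 a c) * (a * r1 a c - 1) < (r1 a c - a) * (1 - a * r2 a c)"
  proof -
    have "(r1 a c - a) * (1 - a * r2 a c) - (a - r2 a c) * (a * r1 a c - 1) = (r1 a c - r2 a c) * (1 - a^2)"
      by (simp add: algebra_simps power2_eq_square)
    moreover have "0 < r1 a c - r2 a c" using r1_gt_a r2_lt_a by simp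
    moreover have "0 < 1 - a^2" using a0 a1 by (simp add: power_less_one_iff abs_if)
    ultimately show ?thesis by (smt (verit) mult_pos_pos)
  qed
  have A: "u1 a c * w2 a c N \<le> \<bar>r2 a c\<bar> ^ (N+1) / ((r1 a c - a) * (1 - a * r2 a c))"
  proof -
    have "u1 a c * w2 a c N = r2 a c ^ (N+1) / ((r1 a c - a) * (1 - a * r2 a c))"
      unfolding u1_def w2_def by simp
    also have "\<dots> \<le> \<bar>r2 a c\<bar> ^ (N+1) / ((r1 a c - a) * (1 - a * r2 a c))"
      using p1 p4 by (intro divide_right_mono) (auto simp: power_abs[symmetric] simp del: power_Suc)
    finally show ?thesis .
  qed
  have B: "\<bar>r2 a c\<bar> ^ (N+1) / ((r1 a c - a) * (1 - a * r2 a c)) < r1 a c ^ (N+1) / ((a - r2 a c) * (a * r1 a c - 1))"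
  proof -
    have "\<bar>r2 a c\<bar> ^ (N+1) / ((r1 a c - a) * (1 - a * r2 a c)) \<le> \<bar>r2 a c\<bar> ^ (N+1) / ((a - r2 a c) * (a * r1 a c - 1))"
      using ineq p1 p2 p3 p4 by (intro divide_left_mono) auto
    also have "\<dots> < r1 a c ^ (N+1) / ((a - r2 a c) * (a * r1 a c - 1))"
      using pw p2 p3 by (intro divide_strict_right_mono) auto
    finally show ?thesis .
  qed
  have C: "u2 a c * w1 a c N = r1 a c ^ (N+1) / ((a - r2 a c) * (a * r1 a c - 1))"
    unfolding u2_def w1_def using p2 p3 by (simp add: field_simps)
  show ?thesis unfolding dt_def using A B C by simp
qed

lemma E1: "Kc a c + alp a c N * u1 a c + bet a c N * u2 a c = 0"
  using dt_neg[of N] unfolding alp_def bet_def dt_def by (simp add: field_simps)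
lemma E2: "Kc a c + alp a c N * w1 a c N + bet a c N * w2 a c N = 0"
  using dt_neg[of N] unfolding alp_def bet_def dt_def by (simp add: field_simps)

lemma nu_sys:
  assumes "i \<le> N"
  shows "(\<Sum>j\<le>N. Mat a 2 1 (c - 1/2) i j * nuv a c N j) = 1"
proof -
  let ?M = "Mat a 2 1 (c - 1/2) i"
  have "(\<Sum>j\<le>N. ?M j * nuv a c N j) = (\<Sum>j\<le>N. ?M j * (C0 a c * 1^j + alp a c N * r1 a c ^ j + bet a c N * r2 a c ^ j))"
    by (rule sum.cong) (auto simp: nuv_def nuf_def)
  also have "\<dots> = C0 a c * (\<Sum>j\<le>N. ?M j * 1^j) + alp a c N * (\<Sum>j\<le>N. ?M j * r1 a c ^ j) + bet a c N * (\<Sum>j\<le>N. ?M j * r2 a c ^ j)"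
    by (simp add: algebra_simps sum.distrib sum_distrib_left)
  also have "\<dots> = C0 a c * chi a c 1 - 2 * a^(i+1) * (Kc a c + alp a c N * u1 a c + bet a c N * u2 a c)
       - a^(N-i+1) * (Kc a c + alp a c N * w1 a c N + bet a c N * w2 a c N)"
  proof -
    have n1: "1 \<noteq> a" "a * 1 \<noteq> 1" using a1 by auto
    have n2: "r1 a c \<noteq> a" "a * r1 a c \<noteq> 1" using r1_gt_a ar1_gt1 by auto
    have n3: "r2 a c \<noteq> a" "a * r2 a c \<noteq> 1" using r2_lt_a ar2_lt1 by auto
    have k: "C0 a c / (1 - a) = Kc a c" unfolding C0_def using a1 by simp
    have "C0 a c * (\<Sum>j\<le>N. ?M j * 1^j) = C0 a c * chi a c 1 - 2 * a^(i+1) * (C0 a c / (1 - a)) - a^(N-i+1) * (C0 a c / (1 - a))"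
      unfolding rowm[OF n1 assms] by (simp add: algebra_simps)
    then have R0: "C0 a c * (\<Sum>j\<le>N. ?M j * 1^j) = C0 a c * chi a c 1 - 2 * a^(i+1) * Kc a c - a^(N-i+1) * Kc a c"
      unfolding k .
    have R1: "(\<Sum>j\<le>N. ?M j * r1 a c ^ j) = - 2 * a^(i+1) * u1 a c - a^(N-i+1) * w1 a c N"
      unfolding rowm[OF n2 assms] chi_r1 u1_def w1_def by simp
    have R2: "(\<Sum>j\<le>N. ?M j * r2 a c ^ j) = - 2 * a^(i+1) * u2 a c - a^(N-i+1) * w2 a c N"
      unfolding rowm[OF n3 assms] chi_r2 u2_def w2_def by simp
    show ?thesis unfolding R0 R1 R2 by (simp add: algebra_simps)
  qed
  also have "\<dots> = 1" unfolding E1 E2 chi_1 by simp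
  finally show ?thesis .
qed

end


definition omf :: "real \<Rightarrow> real \<Rightarrow> nat \<Rightarrow> nat \<Rightarrow> real" where
  "omf a c N k = ws a c + gam a c * qq a c ^ (N - k)"

lemma Lo_scale: "Lo a (\<lambda>j. p * f j) i = p * Lo a f i"
  unfolding Lo_def by (simp add: sum_distrib_left mult_ac)

lemma Lo_cong: "(\<And>j. j < i \<Longrightarrow> f j = g j) \<Longrightarrow> Lo a f i = Lo a g i"
  unfolding Lo_def by (rule sum.cong) auto

lemma exp_cost_a:
  assumes "N > 0"
  shows "exp_cost \<rho> T \<theta> N s0 x \<xi> \<eta> = x * s0 + (\<Sum>k\<le>N.
        1/2 * (\<xi> k)^2 - (s0 - Lo (exp (- \<rho> * T / real N)) (\<lambda>j. \<xi> j + \<eta> j) k) * \<xi> k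
      + 1/2 * \<xi> k * \<eta> k + \<theta> * (\<xi> k)^2)"
proof -
  have e: "exp (- \<rho> * (real k * T / real N - real j * T / real N)) = exp (- \<rho> * T / real N) ^ (k - j)"
    if "j < k" for j k
  proof -
    have "- \<rho> * (real k * T / real N - real j * T / real N) = real (k - j) * (- \<rho> * T / real N)"
      using that assms by (simp add: of_nat_diff field_simps)
    then show ?thesis by (simp only: exp_of_nat_mult)
  qed
  have "\<And>k. (\<Sum>j<k. exp (- \<rho> * (real k * T / real N - real j * T / real N)) * (\<xi> j + \<eta> j))
          = Lo (exp (- \<rho> * T / real N)) (\<lambda>j. \<xi> j + \<eta> j) k"
    unfolding Lo_def by (rule sum.cong[OF refl], subst e, auto)
  then show ?thesis unfolding exp_cost_def by simp
qed

lemma cost_gen: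
  fixes v w :: "nat \<Rightarrow> real"
  assumes "(\<Sum>k\<le>N. v k) = 1" "(\<Sum>k\<le>N. w k) = 1"
  shows "x' * s0 + (\<Sum>k\<le>N.
        1/2 * (s * v k + d * w k)^2 - (s0 - Lo a (\<lambda>j. (s * v j + d * w j) + (s * v j - d * w j)) k) * (s * v k + d * w k)
      + 1/2 * (s * v k + d * w k) * (s * v k - d * w k) + \<theta> * (s * v k + d * w k)^2)
    = (x' - s - d) * s0 + s^2 * (1 + \<theta>) * (\<Sum>k\<le>N. v k ^ 2) + s^2 * 2 * (\<Sum>k\<le>N. v k * Lo a v k)
      + s * d * (1 + 2 * \<theta>) * (\<Sum>k\<le>N. v k * w k) + s * d * 2 * (\<Sum>k\<le>N. w k * Lo a v k)
      + d^2 * \<theta> * (\<Sum>k\<le>N. w k ^ 2)"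
proof -
  have L: "Lo a (\<lambda>j. (s * v j + d * w j) + (s * v j - d * w j)) k = 2 * s * Lo a v k" for k
    using Lo_scale[of a "2 * s" v k] by (simp add: algebra_simps)
  have pt: "1/2 * (s * v k + d * w k)^2 - (s0 - Lo a (\<lambda>j. (s * v j + d * w j) + (s * v j - d * w j)) k) * (s * v k + d * w k)
      + 1/2 * (s * v k + d * w k) * (s * v k - d * w k) + \<theta> * (s * v k + d * w k)^2
    = s^2 * (1 + \<theta>) * v k ^ 2 + s^2 * 2 * (v k * Lo a v k) + s * d * (1 + 2 * \<theta>) * (v k * w k)
      + s * d * 2 * (w k * Lo a v k) + d^2 * \<theta> * w k ^ 2 - s0 * s * v k - s0 * d * w k" for k
    unfolding L by (simp add: algebra_simps power2_eq_square)
  have S: "(\<Sum>k\<le>N. s^2 * (1 + \<theta>) * v k ^ 2 + s^2 * 2 * (v k * Lo a v k) + s * d * (1 + 2 * \<theta>) * (v k * w k)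
      + s * d * 2 * (w k * Lo a v k) + d^2 * \<theta> * w k ^ 2 - s0 * s * v k - s0 * d * w k)
    = s^2 * (1 + \<theta>) * (\<Sum>k\<le>N. v k ^ 2) + s^2 * 2 * (\<Sum>k\<le>N. v k * Lo a v k)
      + s * d * (1 + 2 * \<theta>) * (\<Sum>k\<le>N. v k * w k) + s * d * 2 * (\<Sum>k\<le>N. w k * Lo a v k)
      + d^2 * \<theta> * (\<Sum>k\<le>N. w k ^ 2) - s0 * s * (\<Sum>k\<le>N. v k) - s0 * d * (\<Sum>k\<le>N. w k)"
    by (simp only: sum.distrib sum_subtractf sum_distrib_left)
  show ?thesis unfolding pt S assms by (simp add: algebra_simps)
qed

lemma gt_row: "i \<le> N \<Longrightarrow> (\<Sum>j\<le>N. gt a i j * v j) = Lo a v i + v i / 2"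
  using row_split[of i N a 1 0 0 v] unfolding Mat_def by simp

lemma gtT_row: "(\<Sum>i\<le>N. v i * (\<Sum>j\<le>N. gt a j i * w j)) = (\<Sum>j\<le>N. w j * (Lo a v j + v j / 2))"
proof -
  have "(\<Sum>i\<le>N. v i * (\<Sum>j\<le>N. gt a j i * w j)) = (\<Sum>j\<le>N. w j * (\<Sum>i\<le>N. gt a j i * v i))"
    unfolding sum_distrib_left by (subst sum.swap) (simp add: mult_ac)
  also have "\<dots> = (\<Sum>j\<le>N. w j * (Lo a v j + v j / 2))"
    by (rule sum.cong) (auto simp: gt_row)
  finally show ?thesis .
qed

lemma sol_sum_pos:
  assumes "0 < a" "a < 1" "0 \<le> al" "0 \<le> be" "0 < al + be" "0 \<le> t"
    and "\<forall>i\<le>N. (\<Sum>j\<le>N. Mat a al be t i j * v j) = 1"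
  shows "0 < (\<Sum>i\<le>N. v i)"
proof -
  have e: "(\<Sum>i\<le>N. v i * (\<Sum>j\<le>N. Mat a al be t i j * v j)) = (\<Sum>i\<le>N. v i)"
    using assms(7) by simp
  have q: "0 \<le> (\<Sum>i\<le>N. v i * (\<Sum>j\<le>N. gt a i j * v j))"
    unfolding QF by (intro divide_nonneg_pos add_nonneg_nonneg mult_nonneg_nonneg sum_nonneg)
      (use assms(1,2) in \<open>auto simp: power_le_one\<close>)
  have sq: "0 \<le> t * (\<Sum>i\<le>N. v i ^ 2)" using assms(6) by (simp add: sum_nonneg)
  have q2: "0 \<le> (al + be) * (\<Sum>i\<le>N. v i * (\<Sum>j\<le>N. gt a i j * v j))" using q assms(5) by simp
  have MQ: "(\<Sum>i\<le>N. v i) = (al + be) * (\<Sum>i\<le>N. v i * (\<Sum>j\<le>N. gt a i j * v j)) + t * (\<Sum>i\<le>N. v i ^ 2)"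
    using e Mat_QF[where N=N and u=v and a=a and al=al and be=be and t=t] by simp
  have "0 \<le> (\<Sum>i\<le>N. v i)" using MQ sq q2 by linarith
  moreover have "(\<Sum>i\<le>N. v i) \<noteq> 0"
  proof
    assume z: "(\<Sum>i\<le>N. v i) = 0"
    have "(al + be) * (\<Sum>i\<le>N. v i * (\<Sum>j\<le>N. gt a i j * v j)) \<le> 0"
      using MQ sq z by linarith
    then have "(\<Sum>i\<le>N. v i * (\<Sum>j\<le>N. gt a i j * v j)) \<le> 0" using assms(5) by (simp add: mult_le_0_iff)
    then have "\<forall>i\<le>N. v i = 0" using QF_pos assms(1,2) by blast
    then have "(\<Sum>j\<le>N. Mat a al be t 0 j * v j) = 0" by simp
    then show False using assms(7) by simp
  qed
  ultimately show ?thesis by simp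
qed


lemma nu_vec_eq:
  assumes "N > 0" "\<rho> * T > 0" "\<theta> \<ge> 0"
  shows "nu_vec \<rho> T \<theta> N = nuv (exp (- \<rho> * T / real N)) (1/2 + 2 * \<theta>) N"
proof -
  define a where "a = exp (- \<rho> * T / real N)"
  define c where "c = 1/2 + 2 * \<theta>"
  have a0: "0 < a" unfolding a_def by simp
  have a1: "a < 1" unfolding a_def using assms by simp
  have c0: "1/2 \<le> c" unfolding c_def using assms by simp
  have M: "(\<lambda>i j. Gam \<rho> T N i j + gtil \<rho> T N i j + (if i = j then 2 * \<theta> else 0)) = Mat a 2 1 (c - 1/2)"
    unfolding Gam_def Mat_def c_def a_def gtil_eq[OF assms(1)] by (intro ext) simp
  show ?thesis unfolding nu_vec_def M a_def[symmetric] c_def[symmetric]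
    by (rule Mat_unique) (use a0 a1 c0 nu_sys[OF a0 a1 c0] in \<open>auto simp: nuv_def\<close>)
qed

lemma omega_vec_eq:
  assumes "N > 0" "\<rho> * T > 0" "\<theta> \<ge> 0"
  shows "omega_vec \<rho> T \<theta> N = omv (exp (- \<rho> * T / real N)) (1/2 + 2 * \<theta>) N"
proof -
  define a where "a = exp (- \<rho> * T / real N)"
  define c where "c = 1/2 + 2 * \<theta>"
  have a0: "0 < a" unfolding a_def by simp
  have a1: "a < 1" unfolding a_def using assms by simp
  have c0: "1/2 \<le> c" unfolding c_def using assms by simp
  have M: "(\<lambda>i j. Gam \<rho> T N i j - gtil \<rho> T N i j + (if i = j then 2 * \<theta> else 0)) = Mat a 0 1 (c - 1/2)"
    unfolding Gam_def Mat_def c_def a_def gtil_eq[OF assms(1)] by (intro ext) simp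
  show ?thesis unfolding omega_vec_def M a_def[symmetric] c_def[symmetric]
    by (rule Mat_unique) (use a0 a1 c0 om_sys[OF a0 a1 c0] in \<open>auto simp: omv_def\<close>)
qed

definition Snu where "Snu a c N = (\<Sum>k\<le>N. nuf a c N k)"
definition Qnu where "Qnu a c N = (\<Sum>k\<le>N. nuf a c N k ^ 2)"
definition Som where "Som a c N = (\<Sum>k\<le>N. omf a c N k)"
definition Qom where "Qom a c N = (\<Sum>k\<le>N. omf a c N k ^ 2)"
definition Qno where "Qno a c N = (\<Sum>k\<le>N. nuf a c N k * omf a c N k)"

lemma Snu_pos: assumes "0 < a" "a < 1" "1/2 \<le> c" shows "0 < Snu a c N"
proof -
  have "0 < (\<Sum>i\<le>N. nuv a c N i)"
    by (rule sol_sum_pos[where al=2 and be=1 and t="c - 1/2"]) (use assms nu_sys[OF assms] in auto)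
  moreover have "(\<Sum>i\<le>N. nuv a c N i) = Snu a c N" unfolding Snu_def nuv_def by simp
  ultimately show ?thesis by simp
qed

lemma Som_pos: assumes "0 < a" "a < 1" "1/2 \<le> c" shows "0 < Som a c N"
proof -
  have "0 < (\<Sum>i\<le>N. omv a c N i)"
    by (rule sol_sum_pos[where al=0 and be=1 and t="c - 1/2"]) (use assms om_sys[OF assms] in auto)
  moreover have "(\<Sum>i\<le>N. omv a c N i) = Som a c N" unfolding Som_def omv_def omf_def by simp
  ultimately show ?thesis by simp
qed

lemma eq_cost_formula:
  assumes "N > 0" "\<rho> * T > 0" "\<theta> \<ge> 0"
  defines "a \<equiv> exp (- \<rho> * T / real N)" and "c \<equiv> 1/2 + 2 * \<theta>"
  shows "eq_cost \<rho> T \<theta> s0 x y N =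
     ((x + y) / 2)^2 * (2 / (3 * Snu a c N) - \<theta> / 3 * (Qnu a c N / Snu a c N ^ 2))
   + ((x + y) / 2) * ((x - y) / 2) * (2 / Som a c N - 2 * \<theta> * (Qno a c N / (Snu a c N * Som a c N)))
   + ((x - y) / 2)^2 * \<theta> * (Qom a c N / Som a c N ^ 2)"
proof -
  have a0: "0 < a" unfolding a_def by simp
  have a1: "a < 1" unfolding a_def using assms by simp
  have c0: "1/2 \<le> c" unfolding c_def using assms by simp
  define s where "s = (x + y) / 2"
  define d where "d = (x - y) / 2"
  define v where "v = v_vec \<rho> T \<theta> N"
  define w where "w = w_vec \<rho> T \<theta> N"
  define Sn where "Sn = Snu a c N"
  define So where "So = Som a c N"
  have Snp: "0 < Sn" unfolding Sn_def using Snu_pos[OF a0 a1 c0] .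
  have Sop: "0 < So" unfolding So_def using Som_pos[OF a0 a1 c0] .
  have nuN: "nu_vec \<rho> T \<theta> N = nuv a c N" unfolding a_def c_def using nu_vec_eq[OF assms(1-3)] .
  have omN: "omega_vec \<rho> T \<theta> N = omv a c N" unfolding a_def c_def using omega_vec_eq[OF assms(1-3)] .
  have sn': "(\<Sum>j\<le>N. nuv a c N j) = Sn" unfolding Sn_def Snu_def nuv_def by simp
  have so': "(\<Sum>j\<le>N. omv a c N j) = So" unfolding So_def Som_def omv_def omf_def by simp
  have vdef: "v k = nuv a c N k / Sn" for k unfolding v_def v_vec_def nuN sn' ..
  have wdef: "w k = omv a c N k / So" for k unfolding w_def w_vec_def omN so' ..
  have sv: "(\<Sum>k\<le>N. v k) = 1" unfolding vdef using sn' Snp by (simp add: sum_divide_distrib[symmetric])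
  have sw: "(\<Sum>k\<le>N. w k) = 1" unfolding wdef using so' Sop by (simp add: sum_divide_distrib[symmetric])
  have xi: "xiN \<rho> T \<theta> x y N = (\<lambda>k. s * v k + d * w k)" unfolding xiN_def s_def d_def v_def w_def ..
  have eta: "etaN \<rho> T \<theta> x y N = (\<lambda>k. s * v k - d * w k)" unfolding etaN_def s_def d_def v_def w_def ..
  have C: "eq_cost \<rho> T \<theta> s0 x y N = (x - s - d) * s0 + s^2 * (1 + \<theta>) * (\<Sum>k\<le>N. v k ^ 2) + s^2 * 2 * (\<Sum>k\<le>N. v k * Lo a v k)
      + s * d * (1 + 2 * \<theta>) * (\<Sum>k\<le>N. v k * w k) + s * d * 2 * (\<Sum>k\<le>N. w k * Lo a v k)
      + d^2 * \<theta> * (\<Sum>k\<le>N. w k ^ 2)"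
    unfolding eq_cost_def exp_cost_a[OF assms(1)] xi eta a_def[symmetric]
    by (rule cost_gen[OF sv sw])
  have xsd: "x - s - d = 0" unfolding s_def d_def by (simp add: field_simps)
  have I1: "3 * (\<Sum>k\<le>N. v k * Lo a v k) + (3/2 + 2 * \<theta>) * (\<Sum>k\<le>N. v k ^ 2) = 1 / Sn"
  proof -
    have row: "(\<Sum>j\<le>N. Mat a 2 1 (c - 1/2) i j * v j) = 1 / Sn" if "i \<le> N" for i
    proof -
      have "(\<Sum>j\<le>N. Mat a 2 1 (c - 1/2) i j * v j) = (\<Sum>j\<le>N. Mat a 2 1 (c - 1/2) i j * nuv a c N j) / Sn"
        unfolding vdef by (simp add: sum_divide_distrib)
      then show ?thesis using nu_sys[OF a0 a1 c0 that] by simp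
    qed
    have "(\<Sum>i\<le>N. v i * (\<Sum>j\<le>N. Mat a 2 1 (c - 1/2) i j * v j)) = (\<Sum>i\<le>N. v i * (1 / Sn))"
      by (rule sum.cong) (auto simp: row)
    also have "\<dots> = 1 / Sn" using sv by (simp add: sum_divide_distrib[symmetric])
    finally have A: "(\<Sum>i\<le>N. v i * (\<Sum>j\<le>N. Mat a 2 1 (c - 1/2) i j * v j)) = 1 / Sn" .
    have B: "(\<Sum>i\<le>N. v i * (\<Sum>j\<le>N. gt a i j * v j)) = (\<Sum>k\<le>N. v k * Lo a v k) + (\<Sum>k\<le>N. v k ^ 2) / 2"
    proof -
      have "(\<Sum>i\<le>N. v i * (\<Sum>j\<le>N. gt a i j * v j)) = (\<Sum>i\<le>N. v i * Lo a v i + v i ^ 2 / 2)"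
        by (rule sum.cong[OF refl]) (subst gt_row, auto simp: power2_eq_square algebra_simps)
      then show ?thesis by (simp add: sum.distrib sum_divide_distrib)
    qed
    show ?thesis using A Mat_QF[where N=N and u=v and a=a and al=2 and be=1 and t="c - 1/2"] B
      unfolding c_def by (simp add: algebra_simps)
  qed
  have I2: "(\<Sum>k\<le>N. w k * Lo a v k) + (1/2 + 2 * \<theta>) * (\<Sum>k\<le>N. v k * w k) = 1 / So"
  proof -
    have row: "(\<Sum>j\<le>N. Mat a 0 1 (c - 1/2) i j * w j) = 1 / So" if "i \<le> N" for i
    proof -
      have "(\<Sum>j\<le>N. Mat a 0 1 (c - 1/2) i j * w j) = (\<Sum>j\<le>N. Mat a 0 1 (c - 1/2) i j * omv a c N j) / So"
        unfolding wdef by (simp add: sum_divide_distrib)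
      then show ?thesis using om_sys[OF a0 a1 c0 that] by simp
    qed
    have "(\<Sum>i\<le>N. v i * (\<Sum>j\<le>N. Mat a 0 1 (c - 1/2) i j * w j)) = (\<Sum>i\<le>N. v i * (1 / So))"
      by (rule sum.cong) (auto simp: row)
    also have "\<dots> = 1 / So" using sv by (simp add: sum_divide_distrib[symmetric])
    finally have A: "(\<Sum>i\<le>N. v i * (\<Sum>j\<le>N. Mat a 0 1 (c - 1/2) i j * w j)) = 1 / So" .
    have rr: "(\<Sum>j\<le>N. Mat a 0 1 (c - 1/2) i j * w j) = (\<Sum>j\<le>N. gt a j i * w j) + (c - 1/2) * w i" if "i \<le> N" for i
    proof -
      have "(\<Sum>j\<le>N. Mat a 0 1 (c - 1/2) i j * w j) = (\<Sum>j\<le>N. gt a j i * w j + (if j = i then (c - 1/2) * w j else 0))"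
        unfolding Mat_def by (rule sum.cong) (auto simp: algebra_simps)
      then show ?thesis using that by (simp add: sum.distrib)
    qed
    have "(\<Sum>i\<le>N. v i * (\<Sum>j\<le>N. Mat a 0 1 (c - 1/2) i j * w j))
        = (\<Sum>i\<le>N. v i * (\<Sum>j\<le>N. gt a j i * w j)) + (c - 1/2) * (\<Sum>k\<le>N. v k * w k)"
    proof -
      have "(\<Sum>i\<le>N. v i * (\<Sum>j\<le>N. Mat a 0 1 (c - 1/2) i j * w j))
          = (\<Sum>i\<le>N. v i * (\<Sum>j\<le>N. gt a j i * w j) + (c - 1/2) * (v i * w i))"
        by (rule sum.cong[OF refl]) (subst rr, auto simp: algebra_simps)
      then show ?thesis by (simp add: sum.distrib sum_distrib_left)
    qed
    also have "(\<Sum>i\<le>N. v i * (\<Sum>j\<le>N. gt a j i * w j)) = (\<Sum>k\<le>N. w k * Lo a v k) + (\<Sum>k\<le>N. v k * w k) / 2"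
      unfolding gtT_row by (simp add: algebra_simps sum.distrib sum_divide_distrib)
    finally show ?thesis using A unfolding c_def by (simp add: algebra_simps)
  qed
  have V: "(\<Sum>k\<le>N. v k ^ 2) = Qnu a c N / Sn ^ 2"
    unfolding vdef Qnu_def nuv_def by (simp add: power_divide sum_divide_distrib)
  have W: "(\<Sum>k\<le>N. w k ^ 2) = Qom a c N / So ^ 2"
    unfolding wdef Qom_def omv_def omf_def by (simp add: power_divide sum_divide_distrib)
  have Y: "(\<Sum>k\<le>N. v k * w k) = Qno a c N / (Sn * So)"
    unfolding vdef wdef Qno_def omv_def omf_def nuv_def by (simp add: sum_divide_distrib)
  have X: "(\<Sum>k\<le>N. v k * Lo a v k) = (1 / Sn - (3/2 + 2 * \<theta>) * (\<Sum>k\<le>N. v k ^ 2)) / 3" using I1 by simp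
  have Z: "(\<Sum>k\<le>N. w k * Lo a v k) = 1 / So - (1/2 + 2 * \<theta>) * (\<Sum>k\<le>N. v k * w k)" using I2 by simp
  show ?thesis unfolding C xsd X Z
    unfolding V W Y s_def[symmetric] d_def[symmetric] Sn_def[symmetric] So_def[symmetric]
    using Snp Sop by (simp add: field_simps)
qed


lemma lim_ev: assumes "\<And>N. N > 0 \<Longrightarrow> f N = g N" "g \<longlonglongrightarrow> L" shows "f \<longlonglongrightarrow> (L::real)"
proof -
  have "eventually (\<lambda>N. g N = f N) sequentially"
    using assms(1) by (intro eventually_sequentiallyI[of 1]) auto
  then have "eventually (\<lambda>N. g N = f N) sequentially" .
  with assms(2) show ?thesis by (rule Lim_transform_eventually)
qed

lemma tendsto_eq_val: "(f \<longlongrightarrow> a) F \<Longrightarrow> a = b \<Longrightarrow> (f \<longlongrightarrow> b) F" by simp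

lemma pow_lim:
  fixes y :: "nat \<Rightarrow> real"
  assumes pos: "\<And>N. N > 0 \<Longrightarrow> 0 < y N" and y1: "y \<longlonglongrightarrow> 1"
    and L: "(\<lambda>N. real N * (y N - 1)) \<longlonglongrightarrow> L"
  shows "(\<lambda>N. y N ^ N) \<longlonglongrightarrow> exp L"
proof -
  have lo: "(\<lambda>N. real N * (y N - 1) / y N) \<longlonglongrightarrow> L / 1" by (intro tendsto_intros L y1) simp
  have ev1: "eventually (\<lambda>N. real N * (y N - 1) / y N \<le> real N * ln (y N)) sequentially"
  proof (intro eventually_sequentiallyI[of 1])
    fix N :: nat assume "1 \<le> N"
    then have p: "0 < y N" using pos by simp
    have "ln (1 / y N) \<le> 1 / y N - 1" using p by (intro ln_le_minus_one) simp
    moreover have "ln (1 / y N) = - ln (y N)" using p by (simp add: ln_div)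
    moreover have "(y N - 1) / y N = 1 - 1 / y N" using p by (simp add: diff_divide_distrib)
    ultimately have "(y N - 1) / y N \<le> ln (y N)" by linarith
    then have "real N * ((y N - 1) / y N) \<le> real N * ln (y N)"
      by (rule mult_left_mono) simp
    then show "real N * (y N - 1) / y N \<le> real N * ln (y N)" by simp
  qed
  have ev2: "eventually (\<lambda>N. real N * ln (y N) \<le> real N * (y N - 1)) sequentially"
  proof (intro eventually_sequentiallyI[of 1])
    fix N :: nat assume "1 \<le> N"
    then have p: "0 < y N" using pos by simp
    have "ln (y N) \<le> y N - 1" using p by (intro ln_le_minus_one) simp
    then show "real N * ln (y N) \<le> real N * (y N - 1)" by (simp add: mult_left_mono)
  qed
  have "(\<lambda>N. real N * ln (y N)) \<longlonglongrightarrow> L"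
    using tendsto_sandwich[OF ev1 ev2] lo L by simp
  then have lim: "(\<lambda>N. exp (real N * ln (y N))) \<longlonglongrightarrow> exp L" by (rule tendsto_exp)
  have eqs: "\<And>N. N > 0 \<Longrightarrow> y N ^ N = exp (real N * ln (y N))"
    using pos by (simp add: exp_of_nat_mult)
  show ?thesis by (rule lim_ev[where g="\<lambda>N. exp (real N * ln (y N))", OF eqs lim])
qed

definition aS :: "real \<Rightarrow> nat \<Rightarrow> real" where "aS r N = exp (- r / real N)"

context
  fixes r c :: real
  assumes rp: "0 < r" and c0: "1/2 \<le> c"
begin

lemma cp: "0 < c" using c0 by simp

lemma aS0: "0 < aS r N" unfolding aS_def by simp
lemma aS1: "N > 0 \<Longrightarrow> aS r N < 1" unfolding aS_def using rp by simp
lemma aS_lim: "aS r \<longlonglongrightarrow> 1" unfolding aS_def using rp by real_asymp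
lemma Na_lim: "(\<lambda>N. real N * (1 - aS r N)) \<longlonglongrightarrow> r" unfolding aS_def using rp by real_asymp
lemma aS_pow: "N > 0 \<Longrightarrow> aS r N ^ N = exp (- r)"
  unfolding aS_def by (simp add: exp_of_nat_mult[symmetric])

lemma r1_lim: "(\<lambda>N. r1 (aS r N) c) \<longlonglongrightarrow> 1"
proof -
  have "(\<lambda>N. r1 (aS r N) c) \<longlonglongrightarrow> (c + 1 + (c - 2) * 1^2 + sqrt ((c + 1 + (c - 2) * 1^2)^2 - 4 * 1^2 * c * (c - 1))) / (2 * 1 * c)"
    unfolding r1_def Bq_def Dq_def by (intro tendsto_intros aS_lim) (use cp in auto)
  moreover have "(c + 1 + (c - 2) * 1^2)^2 - 4 * 1^2 * c * (c - 1) = 1" by (simp add: algebra_simps power2_eq_square)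
  ultimately show ?thesis using cp by simp
qed

lemma r2_lim: "(\<lambda>N. r2 (aS r N) c) \<longlonglongrightarrow> (c - 1) / c"
proof -
  have D1: "(c + 1 + (c - 2) * 1^2)^2 - 4 * 1^2 * c * (c - 1) = 1" by (simp add: algebra_simps power2_eq_square)
  have "(\<lambda>N. r2 (aS r N) c) \<longlonglongrightarrow> (c + 1 + (c - 2) * 1^2 - sqrt ((c + 1 + (c - 2) * 1^2)^2 - 4 * 1^2 * c * (c - 1))) / (2 * 1 * c)"
    unfolding r2_def Bq_def Dq_def by (intro tendsto_intros aS_lim) (use cp in auto)
  then have "(\<lambda>N. r2 (aS r N) c) \<longlonglongrightarrow> (c + 1 + (c - 2) * 1^2 - 1) / (2 * 1 * c)"
    by (simp only: D1 real_sqrt_one)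
  moreover have "(c + 1 + (c - 2) * 1^2 - 1) / (2 * 1 * c) = (c - 1) / c" using cp by (simp add: field_simps)
  ultimately show ?thesis by simp
qed

lemma Pq_diff: "Pq a c x - Pq a c 1 = (x - 1) * (Bq a c - a * c * (x + 1))"
  unfolding Pq_def by (simp add: algebra_simps power2_eq_square)

lemma Pq_one: "Pq a c 1 = (1 - a) * (c * (1 - a) + 1 + 2 * a)"
  unfolding Pq_def Bq_def by (simp add: algebra_simps power2_eq_square)

lemma Nr1_lim: "(\<lambda>N. real N * (r1 (aS r N) c - 1)) \<longlonglongrightarrow> 3 * r"
proof -
  let ?a = "aS r"
  let ?den = "\<lambda>N. ?a N * c * (r1 (?a N) c + 1) - Bq (?a N) c"
  have eq: "real N * (r1 (?a N) c - 1) = real N * (1 - ?a N) * (c * (1 - ?a N) + 1 + 2 * ?a N) / ?den N"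
    if "N > 0" for N
  proof -
    have a0: "0 < ?a N" and a1: "?a N < 1" using aS0 aS1[OF that] by auto
    have root: "Pq (?a N) c (r1 (?a N) c) = 0" using Pq_root1[OF a0 a1 c0] .
    have key: "(r1 (?a N) c - 1) * ?den N = (1 - ?a N) * (c * (1 - ?a N) + 1 + 2 * ?a N)"
      using Pq_diff[of "?a N" "r1 (?a N) c"] root Pq_one[of "?a N"] by (simp add: algebra_simps)
    have pos: "0 < (1 - ?a N) * (c * (1 - ?a N) + 1 + 2 * ?a N)"
      using a0 a1 cp by (intro mult_pos_pos add_pos_pos) auto
    then have dn: "?den N \<noteq> 0" using key by auto
    have "real N * (1 - ?a N) * (c * (1 - ?a N) + 1 + 2 * ?a N) / ?den N = real N * ((r1 (?a N) c - 1) * ?den N) / ?den N"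
      using key by (simp add: mult.assoc)
    then show ?thesis using dn by simp
  qed
  have "(\<lambda>N. real N * (1 - ?a N) * (c * (1 - ?a N) + 1 + 2 * ?a N) / ?den N)
        \<longlonglongrightarrow> r * (c * (1 - 1) + 1 + 2 * 1) / (1 * c * (1 + 1) - (c + 1 + (c - 2) * 1^2))"
    unfolding Bq_def by (intro tendsto_intros Na_lim aS_lim r1_lim) (simp add: algebra_simps)
  moreover have "r * (c * (1 - 1) + 1 + 2 * 1) / (1 * c * (1 + 1) - (c + 1 + (c - 2) * 1^2)) = 3 * r"
    by (simp add: algebra_simps)
  ultimately have L: "(\<lambda>N. real N * (1 - ?a N) * (c * (1 - ?a N) + 1 + 2 * ?a N) / ?den N) \<longlonglongrightarrow> 3 * r"
    by (rule tendsto_eq_val)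
  show ?thesis
    by (rule lim_ev[where g="\<lambda>N. real N * (1 - ?a N) * (c * (1 - ?a N) + 1 + 2 * ?a N) / ?den N", OF eq L])
qed

lemma r1_pos: "N > 0 \<Longrightarrow> 0 < r1 (aS r N) c"
proof -
  assume "N > 0"
  then have "1 < r1 (aS r N) c" using r1_gt1[OF aS0 aS1 c0] by blast
  then show ?thesis by simp
qed

lemma r1N_lim: "(\<lambda>N. r1 (aS r N) c ^ N) \<longlonglongrightarrow> exp (3 * r)"
  by (rule pow_lim[OF r1_pos r1_lim Nr1_lim])

lemma r1N1_lim: "(\<lambda>N. r1 (aS r N) c ^ (N + 1)) \<longlonglongrightarrow> exp (3 * r)"
proof -
  have "(\<lambda>N. r1 (aS r N) c * r1 (aS r N) c ^ N) \<longlonglongrightarrow> 1 * exp (3 * r)"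
    by (intro tendsto_intros r1_lim r1N_lim)
  then show ?thesis by simp
qed

end


definition "NaS r N = real N * (1 - aS r N)"
definition "R1 r c N = r1 (aS r N) c"
definition "NR1 r c N = real N * (R1 r c N - 1)"
definition "R1p r c N = R1 r c N ^ (N + 1)"
definition "KS r c N = Kc (aS r N) c"
definition "U2S r c N = u2 (aS r N) c"
definition "W2S r c N = w2 (aS r N) c N"
definition "R2 r c N = r2 (aS r N) c"
definition "G2S r c N = (R2 r c N ^ (N + 1) - 1) / (R2 r c N - 1)"
definition "U1n r c N = 1 / (NR1 r c N + NaS r N)"
definition "W1n r c N = R1p r c N / (NaS r N - aS r N * NR1 r c N)"
definition "dtn r c N = U1n r c N * W2S r c N - U2S r c N * W1n r c N"
definition "NAl r c N = KS r c N * (U2S r c N - W2S r c N) / dtn r c N"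
definition "Bt r c N = KS r c N * (W1n r c N - U1n r c N) / dtn r c N"
definition "AG1 r c N = (R1p r c N - 1) / NR1 r c N"

lemma geom_le: fixes x :: real assumes "x \<noteq> 1" shows "(\<Sum>k\<le>N. x ^ k) = (x ^ (N + 1) - 1) / (x - 1)"
  using geometric_sum[OF assms, of "N+1"] by (simp add: lessThan_Suc_atMost)

context
  fixes r c :: real
  assumes rp: "0 < r" and c0: "1/2 \<le> c"
begin

lemma basics:
  assumes "N > 0"
  shows "0 < aS r N" "aS r N < 1" "1 < R1 r c N" "1 < aS r N * R1 r c N" "R2 r c N < aS r N"
    "aS r N * R2 r c N < 1" "dt (aS r N) c N < 0"
proof -
  have a0: "0 < aS r N" by (rule aS0[OF rp c0])
  have a1: "aS r N < 1" by (rule aS1[OF rp c0 assms])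
  show "0 < aS r N" "aS r N < 1" "1 < R1 r c N" "1 < aS r N * R1 r c N" "R2 r c N < aS r N"
    "aS r N * R2 r c N < 1" "dt (aS r N) c N < 0"
    using a0 a1 r1_gt1[OF a0 a1 c0] ar1_gt1[OF a0 a1 c0]
    r2_lt_a[OF a0 a1 c0] ar2_lt1[OF a0 a1 c0] dt_neg[OF a0 a1 c0]
    unfolding R1_def R2_def by auto
qed

lemma alpha_repr: assumes "N > 0" shows "alp (aS r N) c N = NAl r c N / real N"
proof -
  note b = basics[OF assms]
  have n: "real N > 0" using assms by simp
  have u1: "u1 (aS r N) c = real N * U1n r c N"
    unfolding u1_def U1n_def NR1_def NaS_def using n b(1-4) unfolding R1_def by (simp add: field_simps)
  have w1: "w1 (aS r N) c N = real N * W1n r c N"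
    unfolding w1_def W1n_def NR1_def NaS_def R1p_def using n b(1-4) unfolding R1_def by (simp add: field_simps)
  have d: "dt (aS r N) c N = real N * dtn r c N"
    unfolding dt_def dtn_def u1 w1 U2S_def W2S_def by (simp add: algebra_simps)
  show ?thesis unfolding alp_def NAl_def d KS_def U2S_def W2S_def using n by (simp add: field_simps)
qed

lemma beta_repr: assumes "N > 0" shows "bet (aS r N) c N = Bt r c N"
proof -
  note b = basics[OF assms]
  have n: "real N > 0" using assms by simp
  have u1: "u1 (aS r N) c = real N * U1n r c N"
    unfolding u1_def U1n_def NR1_def NaS_def using n b(1-4) unfolding R1_def by (simp add: field_simps)
  have w1: "w1 (aS r N) c N = real N * W1n r c N"
    unfolding w1_def W1n_def NR1_def NaS_def R1p_def using n b(1-4) unfolding R1_def by (simp add: field_simps)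
  have d: "dt (aS r N) c N = real N * dtn r c N"
    unfolding dt_def dtn_def u1 w1 U2S_def W2S_def by (simp add: algebra_simps)
  have "dtn r c N \<noteq> 0" using b(7) d by auto
  then show ?thesis unfolding bet_def Bt_def d u1 w1 KS_def using n by (simp add: field_simps)
qed

lemma C0_repr: assumes "N > 0" shows "C0 (aS r N) c = NaS r N * KS r c N / real N"
  unfolding C0_def NaS_def KS_def using assms by simp

lemma Snu_repr:
  assumes "N > 0"
  shows "Snu (aS r N) c N = (real N + 1) / real N * (NaS r N * KS r c N) + NAl r c N * AG1 r c N + Bt r c N * G2S r c N"
proof -
  note b = basics[OF assms]
  have n: "real N > 0" using assms by simp
  have "Snu (aS r N) c N = (\<Sum>k\<le>N. C0 (aS r N) c) + alp (aS r N) c N * (\<Sum>k\<le>N. R1 r c N ^ k) + bet (aS r N) c N * (\<Sum>k\<le>N. R2 r c N ^ k)"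
    unfolding Snu_def nuf_def R1_def R2_def by (simp add: sum.distrib sum_distrib_left)
  also have "(\<Sum>k\<le>N. R1 r c N ^ k) = (R1p r c N - 1) / (R1 r c N - 1)"
    unfolding R1p_def using b by (intro geom_le) auto
  also have "(\<Sum>k\<le>N. R2 r c N ^ k) = G2S r c N"
    unfolding G2S_def using b by (intro geom_le) auto
  also have "(\<Sum>k\<le>N. C0 (aS r N) c) = (real N + 1) * C0 (aS r N) c" by simp
  finally show ?thesis unfolding alpha_repr[OF assms] beta_repr[OF assms] C0_repr[OF assms] AG1_def NR1_def
    using n b by (simp add: field_simps)
qed

end


lemma subseq_lim: "f \<longlonglongrightarrow> L \<Longrightarrow> strict_mono \<sigma> \<Longrightarrow> (\<lambda>N. f (\<sigma> N)) \<longlonglongrightarrow> L"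
  using LIMSEQ_subseq_LIMSEQ[of f L \<sigma>] by (simp add: comp_def)

lemma lim_ev_s: fixes \<sigma> :: "nat \<Rightarrow> nat" assumes "strict_mono \<sigma>" "\<And>N. N > 0 \<Longrightarrow> f N = g N" "(\<lambda>N. g (\<sigma> N)) \<longlonglongrightarrow> L"
  shows "(\<lambda>N. f (\<sigma> N)) \<longlonglongrightarrow> (L::real)"
proof (rule lim_ev[where g="\<lambda>N. g (\<sigma> N)", OF _ assms(3)])
  fix N :: nat assume "N > 0"
  moreover have "N \<le> \<sigma> N" using seq_suble[OF assms(1)] .
  ultimately show "f (\<sigma> N) = g (\<sigma> N)" using assms(2) by simp
qed

context
  fixes r c :: real
  assumes rp: "0 < r" and c0: "1/2 \<le> c"
begin

lemma KS_lim: "KS r c \<longlonglongrightarrow> 1/3"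
proof -
  have "KS r c \<longlonglongrightarrow> 1 / (c * (1 - 1) + 1 + 2 * 1)"
    unfolding KS_def Kc_def by (intro tendsto_intros aS_lim[OF rp c0]) simp
  then show ?thesis by simp
qed

lemma NaS_lim: "NaS r \<longlonglongrightarrow> r" unfolding NaS_def using Na_lim[OF rp c0] .
lemma NR1_lim: "NR1 r c \<longlonglongrightarrow> 3 * r" unfolding NR1_def R1_def using Nr1_lim[OF rp c0] .
lemma R1p_lim: "R1p r c \<longlonglongrightarrow> exp (3 * r)" unfolding R1p_def R1_def using r1N1_lim[OF rp c0] .
lemma R1_lim: "R1 r c \<longlonglongrightarrow> 1" unfolding R1_def using r1_lim[OF rp c0] .
lemma R2_lim: "R2 r c \<longlonglongrightarrow> (c - 1) / c" unfolding R2_def using r2_lim[OF rp c0] .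

lemma U1n_lim: "U1n r c \<longlonglongrightarrow> 1 / (4 * r)"
proof -
  have "U1n r c \<longlonglongrightarrow> 1 / (3 * r + r)"
    unfolding U1n_def by (intro tendsto_intros NR1_lim NaS_lim) (use rp in simp)
  then show ?thesis by simp
qed

lemma W1n_lim: "W1n r c \<longlonglongrightarrow> - exp (3 * r) / (2 * r)"
proof -
  have "W1n r c \<longlonglongrightarrow> exp (3 * r) / (r - 1 * (3 * r))"
    unfolding W1n_def by (intro tendsto_intros NR1_lim NaS_lim R1p_lim aS_lim[OF rp c0]) (use rp in simp)
  moreover have "exp (3 * r) / (r - 1 * (3 * r)) = - exp (3 * r) / (2 * r)" using rp by (simp add: field_simps)
  ultimately show ?thesis by simp
qed

lemma AG1_lim: "AG1 r c \<longlonglongrightarrow> (exp (3 * r) - 1) / (3 * r)"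
  unfolding AG1_def by (intro tendsto_intros NR1_lim R1p_lim) (use rp in simp)

lemma U2S_lim: "U2S r c \<longlonglongrightarrow> - c"
proof -
  have "U2S r c \<longlonglongrightarrow> 1 / ((c - 1) / c - 1)"
    unfolding U2S_def u2_def by (intro tendsto_intros R2_lim[unfolded R2_def] aS_lim[OF rp c0]) (use c0 in \<open>simp add: field_simps\<close>)
  moreover have "1 / ((c - 1) / c - 1) = - c" using c0 by (simp add: field_simps)
  ultimately show ?thesis by simp
qed

lemma Nfrac_lim: "(\<lambda>N. (real N + 1) / real N) \<longlonglongrightarrow> 1" by real_asymp

definition "DL W2L = 1 / (4 * r) * W2L - (- c) * (- exp (3 * r) / (2 * r))"
definition "NAL W2L = 1/3 * (- c - W2L) / DL W2L"
definition "BL W2L = 1/3 * (- exp (3 * r) / (2 * r) - 1 / (4 * r)) / DL W2L"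

lemma dtn_lim_s:
  assumes sm: "strict_mono \<sigma>" and W2: "(\<lambda>N. W2S r c (\<sigma> N)) \<longlonglongrightarrow> W2L"
  shows "(\<lambda>N. dtn r c (\<sigma> N)) \<longlonglongrightarrow> DL W2L"
  unfolding dtn_def DL_def
  by (intro tendsto_intros W2 subseq_lim[OF U1n_lim sm] subseq_lim[OF U2S_lim sm] subseq_lim[OF W1n_lim sm])

lemma NAl_lim_s:
  assumes sm: "strict_mono \<sigma>" and W2: "(\<lambda>N. W2S r c (\<sigma> N)) \<longlonglongrightarrow> W2L" and D: "DL W2L \<noteq> 0"
  shows "(\<lambda>N. NAl r c (\<sigma> N)) \<longlonglongrightarrow> NAL W2L"
  unfolding NAl_def NAL_def
  by (intro tendsto_intros W2 subseq_lim[OF KS_lim sm] subseq_lim[OF U2S_lim sm] dtn_lim_s[OF sm W2] D)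

lemma Bt_lim_s:
  assumes sm: "strict_mono \<sigma>" and W2: "(\<lambda>N. W2S r c (\<sigma> N)) \<longlonglongrightarrow> W2L" and D: "DL W2L \<noteq> 0"
  shows "(\<lambda>N. Bt r c (\<sigma> N)) \<longlonglongrightarrow> BL W2L"
  unfolding Bt_def BL_def
  by (intro tendsto_intros W2 subseq_lim[OF KS_lim sm] subseq_lim[OF W1n_lim sm] subseq_lim[OF U1n_lim sm] dtn_lim_s[OF sm W2] D)

lemma Snu_lim_s:
  assumes sm: "strict_mono \<sigma>" and W2: "(\<lambda>N. W2S r c (\<sigma> N)) \<longlonglongrightarrow> W2L" and D: "DL W2L \<noteq> 0"
    and G2: "(\<lambda>N. G2S r c (\<sigma> N)) \<longlonglongrightarrow> G2L"
  shows "(\<lambda>N. Snu (aS r (\<sigma> N)) c (\<sigma> N)) \<longlonglongrightarrow> r / 3 + NAL W2L * ((exp (3 * r) - 1) / (3 * r)) + BL W2L * G2L"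
proof -
  have "(\<lambda>N. (real (\<sigma> N) + 1) / real (\<sigma> N) * (NaS r (\<sigma> N) * KS r c (\<sigma> N)) + NAl r c (\<sigma> N) * AG1 r c (\<sigma> N) + Bt r c (\<sigma> N) * G2S r c (\<sigma> N))
     \<longlonglongrightarrow> 1 * (r * (1/3)) + NAL W2L * ((exp (3 * r) - 1) / (3 * r)) + BL W2L * G2L"
    by (intro tendsto_intros G2 subseq_lim[OF Nfrac_lim sm] subseq_lim[OF NaS_lim sm] subseq_lim[OF KS_lim sm]
        subseq_lim[OF AG1_lim sm] NAl_lim_s[OF sm W2 D] Bt_lim_s[OF sm W2 D])
  then have L: "(\<lambda>N. (real (\<sigma> N) + 1) / real (\<sigma> N) * (NaS r (\<sigma> N) * KS r c (\<sigma> N)) + NAl r c (\<sigma> N) * AG1 r c (\<sigma> N) + Bt r c (\<sigma> N) * G2S r c (\<sigma> N))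
     \<longlonglongrightarrow> r / 3 + NAL W2L * ((exp (3 * r) - 1) / (3 * r)) + BL W2L * G2L" by simp
  show ?thesis
    by (rule lim_ev_s[where g="\<lambda>N. (real N + 1) / real N * (NaS r N * KS r c N) + NAl r c N * AG1 r c N + Bt r c N * G2S r c N", OF sm _ L])
      (rule Snu_repr[OF rp c0])
qed

end


lemma sum_rev_le: fixes f :: "nat \<Rightarrow> real" shows "(\<Sum>k\<le>N. f (N - k)) = (\<Sum>k\<le>N. f k)"
  using sum.atLeastAtMost_rev[of f 0 N] by (simp add: atMost_atLeast0)

lemma pow_small:
  fixes x :: "nat \<Rightarrow> real"
  assumes x: "x \<longlonglongrightarrow> \<rho>" and r1: "\<bar>\<rho>\<bar> < 1"
  shows "(\<lambda>N. real N * x N ^ N) \<longlonglongrightarrow> 0"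
proof -
  define l where "l = (1 + \<bar>\<rho>\<bar>) / 2"
  have l1: "l < 1" and l0: "0 \<le> l" unfolding l_def using r1 by auto
  have "eventually (\<lambda>N. dist (x N) \<rho> < (1 - \<bar>\<rho>\<bar>) / 2) sequentially"
    using x r1 by (intro tendstoD) auto
  then have ev: "eventually (\<lambda>N. \<bar>x N\<bar> \<le> l) sequentially"
  proof eventually_elim
    case (elim N)
    have "\<bar>x N\<bar> - \<bar>\<rho>\<bar> \<le> \<bar>x N - \<rho>\<bar>" by (rule abs_triangle_ineq2)
    moreover have gen: "\<And>A B C :: real. A - B \<le> C \<Longrightarrow> C < (1 - B) / 2 \<Longrightarrow> A \<le> (1 + B) / 2" by (simp add: field_simps)
    ultimately show ?case using elim unfolding l_def dist_real_def by blast
  qed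
  have f: "(\<lambda>N. real N * l ^ N) \<longlonglongrightarrow> 0" using powser_times_n_limit_0[of l] l1 l0 by simp
  show ?thesis
  proof (rule tendsto_0_le[OF f, where K=1])
    show "eventually (\<lambda>N. norm (real N * x N ^ N) \<le> norm (real N * l ^ N) * 1) sequentially"
      using ev
    proof eventually_elim
      case (elim N)
      have "\<bar>x N\<bar> ^ N \<le> l ^ N" by (rule power_mono[OF elim]) simp
      then show ?case using l0 by (simp add: abs_mult power_abs mult_left_mono)
    qed
  qed
qed

lemma pow_small0:
  fixes x :: "nat \<Rightarrow> real"
  assumes x: "x \<longlonglongrightarrow> \<rho>" and r1: "\<bar>\<rho>\<bar> < 1"
  shows "(\<lambda>N. x N ^ (N + 1)) \<longlonglongrightarrow> 0"
proof -
  have A: "(\<lambda>N. real N * x N ^ N) \<longlonglongrightarrow> 0" by (rule pow_small[OF x r1])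
  have "(\<lambda>N. x N * (1 / real N) * (real N * x N ^ N)) \<longlonglongrightarrow> \<rho> * 0 * 0"
    by (intro tendsto_intros x A lim_const_over_n) 
  then have L: "(\<lambda>N. x N * (1 / real N) * (real N * x N ^ N)) \<longlonglongrightarrow> 0" by simp
  show ?thesis
    by (rule lim_ev[where g="\<lambda>N. x N * (1 / real N) * (real N * x N ^ N)", OF _ L]) simp
qed

context
  fixes r c :: real
  assumes rp: "0 < r" and c1: "1/2 < c"
begin

lemma c0': "1/2 \<le> c" using c1 by simp
lemma cpos': "0 < c" using c1 by simp

lemma rho2_abs: "\<bar>(c - 1) / c\<bar> < 1" using c1 by (simp add: abs_if field_simps)

lemma W2S_lim: "W2S r c \<longlonglongrightarrow> 0"
proof -
  have "W2S r c \<longlonglongrightarrow> 0 / (1 - 1 * ((c - 1) / c))"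
    unfolding W2S_def w2_def
    by (intro tendsto_intros pow_small0[OF R2_lim[OF rp c0'] rho2_abs, unfolded R2_def]
        aS_lim[OF rp c0'] R2_lim[OF rp c0', unfolded R2_def]) (use cpos' in \<open>simp add: field_simps\<close>)
  then show ?thesis by simp
qed

lemma G2S_lim: "G2S r c \<longlonglongrightarrow> c"
proof -
  have "G2S r c \<longlonglongrightarrow> (0 - 1) / ((c - 1) / c - 1)"
    unfolding G2S_def
    by (intro tendsto_intros pow_small0[OF R2_lim[OF rp c0'] rho2_abs] R2_lim[OF rp c0'])
      (use cpos' in \<open>simp add: field_simps\<close>)
  moreover have "(0 - 1) / ((c - 1) / c - 1) = c" using cpos' by (simp add: field_simps)
  ultimately show ?thesis by simp
qed

lemma DL0: "DL r c 0 \<noteq> 0"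
proof -
  have "DL r c 0 = - (c * exp (3 * r) / (2 * r))" by (simp add: DL_def[OF rp c0'])
  moreover have "0 < c * exp (3 * r) / (2 * r)" using rp cpos' by simp
  ultimately show ?thesis using rp cpos' by simp
qed

lemma Snu_lim_pos: "(\<lambda>N. Snu (aS r N) c N) \<longlonglongrightarrow> r / 3 + NAL r c 0 * ((exp (3 * r) - 1) / (3 * r)) + BL r c 0 * c"
  using Snu_lim_s[OF rp c0' strict_mono_id _ DL0, of c] W2S_lim G2S_lim by simp

end


lemma sq_expand:
  fixes p q s x y :: real
  shows "(\<Sum>k\<le>N. (p + q * x ^ k + s * y ^ k)^2) = (real N + 1) * p^2 + q^2 * (\<Sum>k\<le>N. (x^2) ^ k) + s^2 * (\<Sum>k\<le>N. (y^2) ^ k)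
     + 2 * p * q * (\<Sum>k\<le>N. x ^ k) + 2 * p * s * (\<Sum>k\<le>N. y ^ k) + 2 * q * s * (\<Sum>k\<le>N. (x * y) ^ k)"
proof -
  have pt: "(p + q * x ^ k + s * y ^ k)^2 = p^2 + q^2 * (x^2) ^ k + s^2 * (y^2) ^ k
     + 2 * p * q * x ^ k + 2 * p * s * y ^ k + 2 * q * s * (x * y) ^ k" for k
    by (simp add: power2_eq_square power_mult_distrib algebra_simps)
  show ?thesis unfolding pt by (simp add: sum.distrib sum_distrib_left)
qed

context
  fixes r c :: real
  assumes rp: "0 < r" and c1: "1/2 < c"
begin

definition "rho2 = (c - 1) / c"

lemma r1r2S: "N > 0 \<Longrightarrow> R1 r c N * R2 r c N = rho2"
  unfolding R1_def R2_def rho2_def using r1r2[OF aS0[OF rp c0'[OF rp c1]] aS1[OF rp c0'[OF rp c1]] c0'[OF rp c1]] by simp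

lemma Qnu_repr:
  assumes "N > 0"
  shows "Qnu (aS r N) c N =
      (real N + 1) / real N * (NaS r N * KS r c N)^2 * (1 / real N)
    + NAl r c N ^ 2 * ((R1p r c N ^ 2 - 1) / (NR1 r c N * (R1 r c N + 1))) * (1 / real N)
    + Bt r c N ^ 2 * ((R2 r c N ^ (N + 1))^2 - 1) / (R2 r c N ^ 2 - 1)
    + 2 * (NaS r N * KS r c N) * NAl r c N * AG1 r c N * (1 / real N)
    + 2 * (NaS r N * KS r c N) * Bt r c N * G2S r c N * (1 / real N)
    + 2 * NAl r c N * Bt r c N * ((rho2 ^ (N + 1) - 1) / (rho2 - 1)) * (1 / real N)"
proof -
  have c0: "1/2 \<le> c" using c1 by simp
  note b = basics[OF rp c0 assms]
  have n: "real N > 0" using assms by simp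
  have r2a: "\<bar>R2 r c N\<bar> < 1" unfolding R2_def using abs_r2_lt1[OF b(1,2) c0] .
  have r22: "R2 r c N ^ 2 \<noteq> 1"
  proof -
    have "R2 r c N ^ 2 < 1" using r2a by (simp add: abs_square_less_1)
    then show ?thesis by simp
  qed
  have r12: "R1 r c N ^ 2 \<noteq> 1" using b(3) by (metis less_irrefl one_less_power zero_less_numeral)
  have rho1: "rho2 \<noteq> 1" unfolding rho2_def using c1 by (simp add: field_simps)
  have "Qnu (aS r N) c N = (\<Sum>k\<le>N. (C0 (aS r N) c + alp (aS r N) c N * R1 r c N ^ k + bet (aS r N) c N * R2 r c N ^ k)^2)"
    unfolding Qnu_def nuf_def R1_def R2_def ..
  also have "\<dots> = (real N + 1) * C0 (aS r N) c ^ 2 + alp (aS r N) c N ^ 2 * (\<Sum>k\<le>N. (R1 r c N ^ 2) ^ k)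
     + bet (aS r N) c N ^ 2 * (\<Sum>k\<le>N. (R2 r c N ^ 2) ^ k) + 2 * C0 (aS r N) c * alp (aS r N) c N * (\<Sum>k\<le>N. R1 r c N ^ k)
     + 2 * C0 (aS r N) c * bet (aS r N) c N * (\<Sum>k\<le>N. R2 r c N ^ k)
     + 2 * alp (aS r N) c N * bet (aS r N) c N * (\<Sum>k\<le>N. (R1 r c N * R2 r c N) ^ k)"
    by (rule sq_expand)
  also have "(\<Sum>k\<le>N. (R1 r c N ^ 2) ^ k) = ((R1 r c N ^ 2) ^ (N + 1) - 1) / (R1 r c N ^ 2 - 1)"
    by (rule geom_le[OF r12])
  also have "(\<Sum>k\<le>N. (R2 r c N ^ 2) ^ k) = ((R2 r c N ^ 2) ^ (N + 1) - 1) / (R2 r c N ^ 2 - 1)"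
    by (rule geom_le[OF r22])
  also have "(\<Sum>k\<le>N. R1 r c N ^ k) = (R1p r c N - 1) / (R1 r c N - 1)"
    unfolding R1p_def using b by (intro geom_le) auto
  also have "(\<Sum>k\<le>N. R2 r c N ^ k) = G2S r c N"
    unfolding G2S_def using b by (intro geom_le) auto
  also have "(\<Sum>k\<le>N. (R1 r c N * R2 r c N) ^ k) = (rho2 ^ (N + 1) - 1) / (rho2 - 1)"
    unfolding r1r2S[OF assms] by (rule geom_le[OF rho1])
  also have "(R1 r c N ^ 2) ^ (N + 1) = R1p r c N ^ 2" unfolding R1p_def by (metis power_mult mult.commute)
  also have "(R2 r c N ^ 2) ^ (N + 1) = (R2 r c N ^ (N + 1)) ^ 2" by (metis power_mult mult.commute)
  also have "R1 r c N ^ 2 - 1 = (R1 r c N - 1) * (R1 r c N + 1)" by (simp add: algebra_simps power2_eq_square)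
  finally show ?thesis
    unfolding alpha_repr[OF rp c0 assms] beta_repr[OF rp c0 assms] C0_repr[OF rp c0 assms] AG1_def NR1_def
    using n b by (simp add: field_simps power2_eq_square)
qed

lemma inv_n: "(\<lambda>N. 1 / real N) \<longlonglongrightarrow> 0" by (rule lim_const_over_n)

lemma rho2_abs': "\<bar>rho2\<bar> < 1" unfolding rho2_def using rho2_abs[OF rp c1] .

lemma Qnu_lim: "(\<lambda>N. Qnu (aS r N) c N) \<longlonglongrightarrow> BL r c 0 ^ 2 * (0 - 1) / (rho2 ^ 2 - 1)"
proof -
  have c0: "1/2 \<le> c" using c1 by simp
  have D: "DL r c 0 \<noteq> 0" by (rule DL0[OF rp c1])
  have NAl: "NAl r c \<longlonglongrightarrow> NAL r c 0" using NAl_lim_s[OF rp c0 strict_mono_id _ D] W2S_lim[OF rp c1] by simp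
  have Bt: "Bt r c \<longlonglongrightarrow> BL r c 0" using Bt_lim_s[OF rp c0 strict_mono_id _ D] W2S_lim[OF rp c1] by simp
  have R2p: "(\<lambda>N. R2 r c N ^ (N + 1)) \<longlonglongrightarrow> 0" by (rule pow_small0[OF R2_lim[OF rp c0] rho2_abs[OF rp c1]])
  have "(\<lambda>N. rho2 * rho2 ^ N) \<longlonglongrightarrow> rho2 * 0"
    by (intro tendsto_intros LIMSEQ_power_zero) (use rho2_abs' in simp)
  then have rhop: "(\<lambda>N. rho2 ^ (N + 1)) \<longlonglongrightarrow> 0" by simp
  have R2sq: "(\<lambda>N. R2 r c N ^ 2) \<longlonglongrightarrow> rho2 ^ 2" unfolding rho2_def by (intro tendsto_intros R2_lim[OF rp c0])
  have ne1: "rho2 ^ 2 - 1 \<noteq> 0"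
  proof -
    have "rho2 ^ 2 < 1" using rho2_abs' by (simp add: abs_square_less_1)
    then show ?thesis by simp
  qed
  have ne2: "rho2 - 1 \<noteq> 0" using rho2_abs' by auto
  have "(\<lambda>N. (real N + 1) / real N * (NaS r N * KS r c N)^2 * (1 / real N)
    + NAl r c N ^ 2 * ((R1p r c N ^ 2 - 1) / (NR1 r c N * (R1 r c N + 1))) * (1 / real N)
    + Bt r c N ^ 2 * ((R2 r c N ^ (N + 1))^2 - 1) / (R2 r c N ^ 2 - 1)
    + 2 * (NaS r N * KS r c N) * NAl r c N * AG1 r c N * (1 / real N)
    + 2 * (NaS r N * KS r c N) * Bt r c N * G2S r c N * (1 / real N)
    + 2 * NAl r c N * Bt r c N * ((rho2 ^ (N + 1) - 1) / (rho2 - 1)) * (1 / real N))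
    \<longlonglongrightarrow> 1 * (r * (1/3))^2 * 0
    + NAL r c 0 ^ 2 * ((exp (3 * r) ^ 2 - 1) / (3 * r * (1 + 1))) * 0
    + BL r c 0 ^ 2 * (0^2 - 1) / (rho2 ^ 2 - 1)
    + 2 * (r * (1/3)) * NAL r c 0 * ((exp (3 * r) - 1) / (3 * r)) * 0
    + 2 * (r * (1/3)) * BL r c 0 * c * 0
    + 2 * NAL r c 0 * BL r c 0 * ((0 - 1) / (rho2 - 1)) * 0"
    by (intro tendsto_intros Nfrac_lim[OF rp c0] NaS_lim[OF rp c0] KS_lim[OF rp c0] inv_n NAl Bt
        R1p_lim[OF rp c0] NR1_lim[OF rp c0] R1_lim[OF rp c0] R2p R2sq AG1_lim[OF rp c0] G2S_lim[OF rp c1] rhop)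
      (use rp ne1 ne2 in auto)
  then have L: "(\<lambda>N. (real N + 1) / real N * (NaS r N * KS r c N)^2 * (1 / real N)
    + NAl r c N ^ 2 * ((R1p r c N ^ 2 - 1) / (NR1 r c N * (R1 r c N + 1))) * (1 / real N)
    + Bt r c N ^ 2 * ((R2 r c N ^ (N + 1))^2 - 1) / (R2 r c N ^ 2 - 1)
    + 2 * (NaS r N * KS r c N) * NAl r c N * AG1 r c N * (1 / real N)
    + 2 * (NaS r N * KS r c N) * Bt r c N * G2S r c N * (1 / real N)
    + 2 * NAl r c N * Bt r c N * ((rho2 ^ (N + 1) - 1) / (rho2 - 1)) * (1 / real N))
    \<longlonglongrightarrow> BL r c 0 ^ 2 * (0 - 1) / (rho2 ^ 2 - 1)" by simp
  show ?thesis by (rule lim_ev[OF Qnu_repr L])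
qed

end


definition "qS r c N = qq (aS r N) c"
definition "wsS r c N = ws (aS r N) c"
definition "gamS r c N = gam (aS r N) c"
definition "GqS r c N = (qS r c N ^ (N + 1) - 1) / (qS r c N - 1)"

lemma geom_bound:
  fixes x :: real assumes "0 \<le> x" "x < 1" shows "(\<Sum>k\<le>N. x ^ k) \<le> 1 / (1 - x)"
proof -
  have "(\<Sum>k\<le>N. x ^ k) = (1 - x ^ (N + 1)) / (1 - x)" using geom_le[of x N] assms by (simp add: field_simps)
  also have "\<dots> \<le> 1 / (1 - x)" using assms by (intro divide_right_mono) auto
  finally show ?thesis .
qed

context
  fixes r c :: real
  assumes rp: "0 < r" and c0: "1/2 \<le> c"
begin

lemma q_abs: assumes "N > 0" shows "\<bar>qS r c N\<bar> \<le> \<bar>c - 1\<bar> / c" "\<bar>qS r c N\<bar> < 1"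
proof -
  have a0: "0 < aS r N" and a1: "aS r N < 1" using basics[OF rp c0 assms] by auto
  have cp: "0 < c" using c0 by simp
  have e: "\<bar>qS r c N\<bar> = aS r N * (\<bar>c - 1\<bar> / c)" unfolding qS_def qq_def using a0 cp by (simp add: abs_mult abs_divide)
  have h: "\<bar>c - 1\<bar> / c \<le> 1" using c0 cp by (simp add: abs_if field_simps)
  have "aS r N * (\<bar>c - 1\<bar> / c) \<le> 1 * (\<bar>c - 1\<bar> / c)" using a1 cp by (intro mult_right_mono) auto
  then show "\<bar>qS r c N\<bar> \<le> \<bar>c - 1\<bar> / c" unfolding e by simp
  show "\<bar>qS r c N\<bar> < 1" unfolding e using a0 a1 h
    by (metis abs_ge_zero mult_less_cancel_right1 mult.commute order_le_less_trans zero_le_divide_iff le_less  not_le mult_le_cancel_left1 divide_nonneg_pos cp less_eq_real_def)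
qed

lemma ws_repr: "N > 0 \<Longrightarrow> (real N + 1) * wsS r c N = (real N + 1) / real N * (NaS r N / (c + aS r N * (1 - c)))"
  unfolding wsS_def ws_def NaS_def by simp

lemma Som_repr:
  assumes "N > 0"
  shows "Som (aS r N) c N = (real N + 1) / real N * (NaS r N / (c + aS r N * (1 - c))) + gamS r c N * GqS r c N"
proof -
  have q1: "qS r c N \<noteq> 1" using q_abs(2)[OF assms] by auto
  have "Som (aS r N) c N = (real N + 1) * wsS r c N + gamS r c N * (\<Sum>k\<le>N. qS r c N ^ (N - k))"
    unfolding Som_def omf_def wsS_def gamS_def qS_def by (simp add: sum.distrib sum_distrib_left)
  also have "(\<Sum>k\<le>N. qS r c N ^ (N - k)) = (\<Sum>k\<le>N. qS r c N ^ k)" by (rule sum_rev_le)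
  also have "\<dots> = GqS r c N" unfolding GqS_def by (rule geom_le[OF q1])
  finally show ?thesis unfolding ws_repr[OF assms] by simp
qed

lemma Qom_repr:
  assumes "N > 0"
  shows "Qom (aS r N) c N = (real N + 1) / real N * (NaS r N / (c + aS r N * (1 - c))) * wsS r c N
     + 2 * wsS r c N * gamS r c N * GqS r c N + gamS r c N ^ 2 * ((qS r c N ^ (N + 1))^2 - 1) / (qS r c N ^ 2 - 1)"
proof -
  have q1: "qS r c N \<noteq> 1" using q_abs(2)[OF assms] by auto
  have q2: "qS r c N ^ 2 \<noteq> 1" using q_abs(2)[OF assms] by (simp add: abs_square_eq_1)
  have pt: "omf (aS r N) c N k ^ 2 = wsS r c N ^ 2 + 2 * wsS r c N * gamS r c N * qS r c N ^ (N - k)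
      + gamS r c N ^ 2 * (qS r c N ^ 2) ^ (N - k)" for k
    unfolding omf_def wsS_def gamS_def qS_def by (simp add: power2_eq_square power_mult_distrib algebra_simps)
  have "Qom (aS r N) c N = (real N + 1) * wsS r c N ^ 2 + 2 * wsS r c N * gamS r c N * (\<Sum>k\<le>N. qS r c N ^ (N - k))
      + gamS r c N ^ 2 * (\<Sum>k\<le>N. (qS r c N ^ 2) ^ (N - k))"
    unfolding Qom_def pt by (simp add: sum.distrib sum_distrib_left)
  also have "(\<Sum>k\<le>N. qS r c N ^ (N - k)) = (\<Sum>k\<le>N. qS r c N ^ k)" by (rule sum_rev_le)
  also have "\<dots> = GqS r c N" unfolding GqS_def by (rule geom_le[OF q1])
  also have "(\<Sum>k\<le>N. (qS r c N ^ 2) ^ (N - k)) = (\<Sum>k\<le>N. (qS r c N ^ 2) ^ k)" by (rule sum_rev_le)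
  also have "\<dots> = ((qS r c N ^ 2) ^ (N + 1) - 1) / (qS r c N ^ 2 - 1)" by (rule geom_le[OF q2])
  also have "(qS r c N ^ 2) ^ (N + 1) = (qS r c N ^ (N + 1))^2" by (metis power_mult mult.commute)
  also have "(real N + 1) * wsS r c N ^ 2 = ((real N + 1) * wsS r c N) * wsS r c N" by (simp add: power2_eq_square)
  finally show ?thesis unfolding ws_repr[OF assms] by simp
qed

lemma Qno_repr:
  assumes "N > 0"
  shows "Qno (aS r N) c N = wsS r c N * Snu (aS r N) c N + gamS r c N * (C0 (aS r N) c * GqS r c N
     + alp (aS r N) c N * (\<Sum>k\<le>N. R1 r c N ^ k * qS r c N ^ (N - k))
     + bet (aS r N) c N * (\<Sum>k\<le>N. R2 r c N ^ k * qS r c N ^ (N - k)))"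
proof -
  have q1: "qS r c N \<noteq> 1" using q_abs(2)[OF assms] by auto
  have G: "(\<Sum>k\<le>N. qS r c N ^ (N - k)) = GqS r c N"
    unfolding GqS_def sum_rev_le by (rule geom_le[OF q1])
  have "Qno (aS r N) c N = wsS r c N * Snu (aS r N) c N + gamS r c N * (C0 (aS r N) c * (\<Sum>k\<le>N. qS r c N ^ (N - k))
     + alp (aS r N) c N * (\<Sum>k\<le>N. R1 r c N ^ k * qS r c N ^ (N - k))
     + bet (aS r N) c N * (\<Sum>k\<le>N. R2 r c N ^ k * qS r c N ^ (N - k)))"
    unfolding Qno_def Snu_def nuf_def omf_def wsS_def gamS_def qS_def R1_def R2_def
    by (simp add: algebra_simps sum.distrib sum_distrib_left)
  then show ?thesis unfolding G .
qed

end


lemma ev_bound: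
  fixes x :: "nat \<Rightarrow> real"
  assumes x: "x \<longlonglongrightarrow> \<rho>" and r1: "\<bar>\<rho>\<bar> < 1"
  shows "eventually (\<lambda>N. \<bar>x N\<bar> \<le> (1 + \<bar>\<rho>\<bar>) / 2) sequentially"
proof -
  have "eventually (\<lambda>N. dist (x N) \<rho> < (1 - \<bar>\<rho>\<bar>) / 2) sequentially"
    using x r1 by (intro tendstoD) auto
  then show ?thesis
  proof eventually_elim
    case (elim N)
    have "\<bar>x N\<bar> - \<bar>\<rho>\<bar> \<le> \<bar>x N - \<rho>\<bar>" by (rule abs_triangle_ineq2)
    moreover have gen: "\<And>A B C :: real. A - B \<le> C \<Longrightarrow> C < (1 - B) / 2 \<Longrightarrow> A \<le> (1 + B) / 2" by (simp add: field_simps)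
    ultimately show ?case using elim unfolding dist_real_def by blast
  qed
qed

context
  fixes r c :: real
  assumes rp: "0 < r" and c1: "1/2 < c"
begin

lemma c0: "1/2 \<le> c" using c1 by simp
lemma cpos12: "0 < c" using c1 by simp

lemma qS_lim: "qS r c \<longlonglongrightarrow> rho2 c"
proof -
  have "qS r c \<longlonglongrightarrow> 1 * (c - 1) / c" unfolding qS_def qq_def by (intro tendsto_intros aS_lim[OF rp c0]) (use cpos12 in simp)
  then show ?thesis unfolding rho2_def[OF rp c1] by simp
qed

lemma qSp_lim: "(\<lambda>N. qS r c N ^ (N + 1)) \<longlonglongrightarrow> 0"
  by (rule pow_small0[OF qS_lim rho2_abs'[OF rp c1]])

lemma wsS_lim: "wsS r c \<longlonglongrightarrow> 0"
proof -
  have "wsS r c \<longlonglongrightarrow> (1 - 1) / (c + 1 * (1 - c))" unfolding wsS_def ws_def by (intro tendsto_intros aS_lim[OF rp c0]) simp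
  then show ?thesis by simp
qed

lemma gamS_lim: "gamS r c \<longlonglongrightarrow> 1 / c"
proof -
  have "gamS r c \<longlonglongrightarrow> 1 / c - 0" unfolding gamS_def gam_def
    by (intro tendsto_intros wsS_lim[unfolded wsS_def]) (use cpos12 in simp)
  then show ?thesis by simp
qed

lemma rho2_ne1: "rho2 c - 1 \<noteq> 0" using rho2_abs'[OF rp c1] by auto
lemma rho2_val: "(0 - 1) / (rho2 c - 1) = c" unfolding rho2_def[OF rp c1] using cpos12 by (simp add: field_simps)

lemma GqS_lim: "GqS r c \<longlonglongrightarrow> c"
proof -
  have "GqS r c \<longlonglongrightarrow> (0 - 1) / (rho2 c - 1)" unfolding GqS_def
    by (intro tendsto_intros qSp_lim qS_lim rho2_ne1)
  then show ?thesis unfolding rho2_val .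
qed

lemma Som_lim: "(\<lambda>N. Som (aS r N) c N) \<longlonglongrightarrow> r + 1"
proof -
  have "(\<lambda>N. (real N + 1) / real N * (NaS r N / (c + aS r N * (1 - c))) + gamS r c N * GqS r c N)
      \<longlonglongrightarrow> 1 * (r / (c + 1 * (1 - c))) + 1 / c * c"
    by (intro tendsto_intros Nfrac_lim[OF rp c0] NaS_lim[OF rp c0] aS_lim[OF rp c0] gamS_lim GqS_lim) simp
  then have L: "(\<lambda>N. (real N + 1) / real N * (NaS r N / (c + aS r N * (1 - c))) + gamS r c N * GqS r c N)
      \<longlonglongrightarrow> r + 1" using cpos12 by simp
  show ?thesis by (rule lim_ev[OF Som_repr[OF rp c0] L])
qed

lemma Qom_lim: "(\<lambda>N. Qom (aS r N) c N) \<longlonglongrightarrow> (1 / c)^2 * (0 - 1) / (rho2 c ^ 2 - 1)"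
proof -
  have ne: "rho2 c ^ 2 - 1 \<noteq> 0"
  proof -
    have "rho2 c ^ 2 < 1" using rho2_abs'[OF rp c1] by (simp add: abs_square_less_1)
    then show ?thesis by simp
  qed
  have "(\<lambda>N. (real N + 1) / real N * (NaS r N / (c + aS r N * (1 - c))) * wsS r c N
     + 2 * wsS r c N * gamS r c N * GqS r c N + gamS r c N ^ 2 * ((qS r c N ^ (N + 1))^2 - 1) / (qS r c N ^ 2 - 1))
     \<longlonglongrightarrow> 1 * (r / (c + 1 * (1 - c))) * 0 + 2 * 0 * (1 / c) * c + (1 / c)^2 * (0^2 - 1) / (rho2 c ^ 2 - 1)"
    by (intro tendsto_intros Nfrac_lim[OF rp c0] NaS_lim[OF rp c0] aS_lim[OF rp c0] gamS_lim GqS_lim wsS_lim qSp_lim qS_lim ne) simp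
  then have L: "(\<lambda>N. (real N + 1) / real N * (NaS r N / (c + aS r N * (1 - c))) * wsS r c N
     + 2 * wsS r c N * gamS r c N * GqS r c N + gamS r c N ^ 2 * ((qS r c N ^ (N + 1))^2 - 1) / (qS r c N ^ 2 - 1))
     \<longlonglongrightarrow> (1 / c)^2 * (0 - 1) / (rho2 c ^ 2 - 1)" by simp
  show ?thesis by (rule lim_ev[OF Qom_repr[OF rp c0] L])
qed

lemma X1_lim: "(\<lambda>N. alp (aS r N) c N * (\<Sum>k\<le>N. R1 r c N ^ k * qS r c N ^ (N - k))) \<longlonglongrightarrow> 0"
proof -
  define m where "m = \<bar>rho2 c\<bar>"
  have m0: "0 \<le> m" and m1: "m < 1" unfolding m_def using rho2_abs'[OF rp c1] by auto
  have D: "DL r c 0 \<noteq> 0" by (rule DL0[OF rp c1])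
  have NAl: "NAl r c \<longlonglongrightarrow> NAL r c 0" using NAl_lim_s[OF rp c0 strict_mono_id _ D] W2S_lim[OF rp c1] by simp
  have f: "(\<lambda>N. NAl r c N * (1 / real N) * R1p r c N) \<longlonglongrightarrow> 0"
    using tendsto_mult[OF tendsto_mult[OF NAl inv_n[OF rp c1]] R1p_lim[OF rp c0]] by simp
  show ?thesis
  proof (rule tendsto_0_le[OF f, where K="1 / (1 - m)"])
    show "eventually (\<lambda>N. norm (alp (aS r N) c N * (\<Sum>k\<le>N. R1 r c N ^ k * qS r c N ^ (N - k)))
        \<le> norm (NAl r c N * (1 / real N) * R1p r c N) * (1 / (1 - m))) sequentially"
    proof (intro eventually_sequentiallyI[of 1])
      fix N :: nat assume "1 \<le> N"
      then have N0: "N > 0" by simp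
      note b = basics[OF rp c0 N0]
      have qm: "\<bar>qS r c N\<bar> \<le> m" unfolding m_def rho2_def[OF rp c1] using q_abs(1)[OF rp c0 N0] cpos12
        by (simp add: abs_divide)
      have "\<bar>\<Sum>k\<le>N. R1 r c N ^ k * qS r c N ^ (N - k)\<bar> \<le> (\<Sum>k\<le>N. \<bar>R1 r c N ^ k * qS r c N ^ (N - k)\<bar>)"
        by (rule sum_abs)
      also have "\<dots> \<le> (\<Sum>k\<le>N. R1 r c N ^ N * m ^ (N - k))"
      proof (rule sum_mono)
        fix k assume "k \<in> {..N}"
        then have kN: "k \<le> N" by simp
        have "R1 r c N ^ k \<le> R1 r c N ^ N" using b(3) kN by (intro power_increasing) auto
        moreover have "\<bar>qS r c N\<bar> ^ (N - k) \<le> m ^ (N - k)" using qm by (intro power_mono) auto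
        ultimately show "\<bar>R1 r c N ^ k * qS r c N ^ (N - k)\<bar> \<le> R1 r c N ^ N * m ^ (N - k)"
          using b(3) by (simp add: abs_mult power_abs mult_mono)
      qed
      also have "\<dots> = R1 r c N ^ N * (\<Sum>k\<le>N. m ^ k)" by (simp add: sum_distrib_left[symmetric] sum_rev_le)
      also have "\<dots> \<le> R1p r c N * (1 / (1 - m))"
      proof (rule mult_mono)
        show "R1 r c N ^ N \<le> R1p r c N" unfolding R1p_def using b(3) by (intro power_increasing) auto
        show "(\<Sum>k\<le>N. m ^ k) \<le> 1 / (1 - m)" by (rule geom_bound[OF m0 m1])
      qed (use b(3) m1 m0 in \<open>auto simp: R1p_def sum_nonneg\<close>)
      finally have T: "\<bar>\<Sum>k\<le>N. R1 r c N ^ k * qS r c N ^ (N - k)\<bar> \<le> R1p r c N * (1 / (1 - m))" .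
      have "norm (alp (aS r N) c N * (\<Sum>k\<le>N. R1 r c N ^ k * qS r c N ^ (N - k)))
          = \<bar>NAl r c N * (1 / real N)\<bar> * \<bar>\<Sum>k\<le>N. R1 r c N ^ k * qS r c N ^ (N - k)\<bar>"
        unfolding alpha_repr[OF rp c0 N0] by (simp add: abs_mult)
      also have "\<dots> \<le> \<bar>NAl r c N * (1 / real N)\<bar> * (R1p r c N * (1 / (1 - m)))"
        by (rule mult_left_mono[OF T]) simp
      also have "\<dots> = norm (NAl r c N * (1 / real N) * R1p r c N) * (1 / (1 - m))"
        using b(3) unfolding R1p_def by (simp add: abs_mult)
      finally show "norm (alp (aS r N) c N * (\<Sum>k\<le>N. R1 r c N ^ k * qS r c N ^ (N - k)))
        \<le> norm (NAl r c N * (1 / real N) * R1p r c N) * (1 / (1 - m))" .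
    qed
  qed
qed

lemma X2_lim: "(\<lambda>N. bet (aS r N) c N * (\<Sum>k\<le>N. R2 r c N ^ k * qS r c N ^ (N - k))) \<longlonglongrightarrow> 0"
proof -
  define l where "l = (1 + \<bar>rho2 c\<bar>) / 2"
  have l0: "0 \<le> l" and l1: "l < 1" and ml: "\<bar>rho2 c\<bar> \<le> l" unfolding l_def using rho2_abs'[OF rp c1] by auto
  have D: "DL r c 0 \<noteq> 0" by (rule DL0[OF rp c1])
  have Bt: "Bt r c \<longlonglongrightarrow> BL r c 0" using Bt_lim_s[OF rp c0 strict_mono_id _ D] W2S_lim[OF rp c1] by simp
  have nl: "(\<lambda>N. real N * l ^ N + l ^ N) \<longlonglongrightarrow> 0 + 0"
    using l0 l1 by (intro tendsto_intros powser_times_n_limit_0 LIMSEQ_power_zero) auto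
  have f: "(\<lambda>N. Bt r c N * (real N * l ^ N + l ^ N)) \<longlonglongrightarrow> 0"
    using tendsto_mult[OF Bt nl] by simp
  have ev: "eventually (\<lambda>N. \<bar>R2 r c N\<bar> \<le> l) sequentially"
    unfolding l_def rho2_def[OF rp c1] by (rule ev_bound[OF R2_lim[OF rp c0] rho2_abs[OF rp c1]])
  show ?thesis
  proof (rule tendsto_0_le[OF f, where K=1])
    have "eventually (\<lambda>N. \<bar>R2 r c N\<bar> \<le> l \<and> N > 0) sequentially"
      using ev eventually_gt_at_top[of 0] by eventually_elim auto
    then show "eventually (\<lambda>N. norm (bet (aS r N) c N * (\<Sum>k\<le>N. R2 r c N ^ k * qS r c N ^ (N - k)))
        \<le> norm (Bt r c N * (real N * l ^ N + l ^ N)) * 1) sequentially"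
    proof eventually_elim
      case (elim N)
      then have N0: "N > 0" and rl: "\<bar>R2 r c N\<bar> \<le> l" by auto
      have qm: "\<bar>qS r c N\<bar> \<le> l" using q_abs(1)[OF rp c0 N0] ml cpos12 unfolding rho2_def[OF rp c1]
        by (simp add: abs_divide)
      have "\<bar>\<Sum>k\<le>N. R2 r c N ^ k * qS r c N ^ (N - k)\<bar> \<le> (\<Sum>k\<le>N. \<bar>R2 r c N ^ k * qS r c N ^ (N - k)\<bar>)"
        by (rule sum_abs)
      also have "\<dots> \<le> (\<Sum>k\<le>N. l ^ N)"
      proof (rule sum_mono)
        fix k assume "k \<in> {..N}"
        then have kN: "k \<le> N" by simp
        have "\<bar>R2 r c N\<bar> ^ k \<le> l ^ k" using rl by (intro power_mono) auto
        moreover have "\<bar>qS r c N\<bar> ^ (N - k) \<le> l ^ (N - k)" using qm by (intro power_mono) auto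
        ultimately have "\<bar>R2 r c N\<bar> ^ k * \<bar>qS r c N\<bar> ^ (N - k) \<le> l ^ k * l ^ (N - k)"
          using l0 by (intro mult_mono) auto
        also have "l ^ k * l ^ (N - k) = l ^ N" using kN by (simp add: power_add[symmetric])
        finally show "\<bar>R2 r c N ^ k * qS r c N ^ (N - k)\<bar> \<le> l ^ N" by (simp add: abs_mult power_abs)
      qed
      also have "\<dots> = real N * l ^ N + l ^ N" by (simp add: algebra_simps)
      finally have T: "\<bar>\<Sum>k\<le>N. R2 r c N ^ k * qS r c N ^ (N - k)\<bar> \<le> real N * l ^ N + l ^ N" .
      have "norm (bet (aS r N) c N * (\<Sum>k\<le>N. R2 r c N ^ k * qS r c N ^ (N - k)))
          = \<bar>Bt r c N\<bar> * \<bar>\<Sum>k\<le>N. R2 r c N ^ k * qS r c N ^ (N - k)\<bar>"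
        unfolding beta_repr[OF rp c0 N0] by (simp add: abs_mult)
      also have "\<dots> \<le> \<bar>Bt r c N\<bar> * (real N * l ^ N + l ^ N)" by (rule mult_left_mono[OF T]) simp
      also have "\<dots> = norm (Bt r c N * (real N * l ^ N + l ^ N)) * 1" using l0 by (simp add: abs_mult)
      finally show ?case .
    qed
  qed
qed

lemma C0S_lim: "(\<lambda>N. C0 (aS r N) c) \<longlonglongrightarrow> 0"
proof -
  have "(\<lambda>N. C0 (aS r N) c) \<longlonglongrightarrow> (1 - 1) * (1 / (c * (1 - 1) + 1 + 2 * 1))"
    unfolding C0_def Kc_def by (intro tendsto_intros aS_lim[OF rp c0]) simp
  then show ?thesis by simp
qed

lemma Qno_lim: "(\<lambda>N. Qno (aS r N) c N) \<longlonglongrightarrow> 0"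
proof -
  have "(\<lambda>N. wsS r c N * Snu (aS r N) c N + gamS r c N * (C0 (aS r N) c * GqS r c N
     + alp (aS r N) c N * (\<Sum>k\<le>N. R1 r c N ^ k * qS r c N ^ (N - k))
     + bet (aS r N) c N * (\<Sum>k\<le>N. R2 r c N ^ k * qS r c N ^ (N - k))))
    \<longlonglongrightarrow> 0 * (r / 3 + NAL r c 0 * ((exp (3 * r) - 1) / (3 * r)) + BL r c 0 * c) + 1 / c * (0 * c + 0 + 0)"
    by (intro tendsto_intros wsS_lim Snu_lim_pos[OF rp c1] gamS_lim C0S_lim GqS_lim X1_lim X2_lim)
  then have L: "(\<lambda>N. wsS r c N * Snu (aS r N) c N + gamS r c N * (C0 (aS r N) c * GqS r c N
     + alp (aS r N) c N * (\<Sum>k\<le>N. R1 r c N ^ k * qS r c N ^ (N - k))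
     + bet (aS r N) c N * (\<Sum>k\<le>N. R2 r c N ^ k * qS r c N ^ (N - k))))
    \<longlonglongrightarrow> 0" by simp
  show ?thesis by (rule lim_ev[OF Qno_repr[OF rp c0] L])
qed

end


lemma aS_eq: "exp (- \<rho> * T / real N) = aS (\<rho> * T) N" unfolding aS_def by simp

lemma part_a:
  fixes \<rho> T \<theta> s0 x y :: real
  assumes "\<rho> > 0" "T > 0" "\<theta> > 0"
  shows "(\<lambda>N. eq_cost \<rho> T \<theta> s0 x y N) \<longlonglongrightarrow>
             (x + y)^2 * (36 * exp (6 * \<rho> * T) * (8 * \<rho> * T + 13) - 60 * exp (3 * \<rho> * T) - 3)
               / (16 * (2 * exp (3 * \<rho> * T) * (3 * \<rho> * T + 5) - 1)^2)
             + (x^2 - y^2) / (2 * (\<rho> * T + 1))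
             + (x - y)^2 / (16 * (\<rho> * T + 1)^2)"
proof -
  define r where "r = \<rho> * T"
  define c where "c = 1/2 + 2 * \<theta>"
  have rp: "0 < r" unfolding r_def using assms by simp
  have c1: "1/2 < c" unfolding c_def using assms by simp
  have c0: "1/2 \<le> c" using c1 by simp
  have cp: "0 < c" using c1 by simp
  have th: "\<theta> = (2 * c - 1) / 4" unfolding c_def by simp
  define E where "E = exp (3 * r)"
  have E1: "1 \<le> E" unfolding E_def using rp by simp
  define SL where "SL = r / 3 + NAL r c 0 * ((exp (3 * r) - 1) / (3 * r)) + BL r c 0 * c"
  define QL where "QL = BL r c 0 ^ 2 * (0 - 1) / (rho2 c ^ 2 - 1)"
  define OL where "OL = (1 / c)^2 * (0 - 1) / (rho2 c ^ 2 - 1)"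
  have dl: "DL r c 0 = - (c * E / (2 * r))" unfolding DL_def[OF rp c0] E_def by simp
  have nal: "NAL r c 0 = 2 * r / (3 * E)"
    unfolding NAL_def[OF rp c0] dl using rp cp E1 by (simp add: field_simps)
  have bl: "BL r c 0 = (2 * E + 1) / (6 * c * E)"
    unfolding BL_def[OF rp c0] dl E_def[symmetric] using rp cp E1 by (simp add: field_simps)
  have sl: "SL = (6 * r * E + 10 * E - 1) / (18 * E)"
    unfolding SL_def nal bl E_def[symmetric] using rp cp E1 by (simp add: field_simps)
  have rho: "rho2 c ^ 2 - 1 = - (2 * c - 1) / c^2"
    unfolding rho2_def[OF rp c1] using cp by (simp add: field_simps power2_eq_square)
  have ql: "\<theta> * QL = (2 * E + 1)^2 / (144 * E^2)"
    unfolding QL_def bl rho th using cp c1 E1 by (simp add: field_simps power2_eq_square)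
  have ol: "\<theta> * OL = 1 / 4"
    unfolding OL_def rho th using cp c1 by (simp add: field_simps power2_eq_square)
  have Gp: "0 < 6 * r * E + 10 * E - 1" using rp E1 by (smt (verit) mult_nonneg_nonneg)
  have SLp: "SL \<noteq> 0" unfolding sl using Gp E1 by simp
  let ?F = "\<lambda>N. ((x + y) / 2)^2 * (2 / (3 * Snu (aS r N) c N) - \<theta> / 3 * (Qnu (aS r N) c N / Snu (aS r N) c N ^ 2))
   + ((x + y) / 2) * ((x - y) / 2) * (2 / Som (aS r N) c N - 2 * \<theta> * (Qno (aS r N) c N / (Snu (aS r N) c N * Som (aS r N) c N)))
   + ((x - y) / 2)^2 * \<theta> * (Qom (aS r N) c N / Som (aS r N) c N ^ 2)"
  have eqN: "eq_cost \<rho> T \<theta> s0 x y N = ?F N" if "N > 0" for N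
    using eq_cost_formula[OF that _ less_imp_le[OF assms(3)], of \<rho> T s0 x y] rp
    unfolding aS_eq r_def[symmetric] c_def[symmetric] by simp
  have r1: "r + 1 \<noteq> 0" using rp by simp
  have "?F \<longlonglongrightarrow> ((x + y) / 2)^2 * (2 / (3 * SL) - \<theta> / 3 * (QL / SL ^ 2))
   + ((x + y) / 2) * ((x - y) / 2) * (2 / (r + 1) - 2 * \<theta> * (0 / (SL * (r + 1))))
   + ((x - y) / 2)^2 * \<theta> * (OL / (r + 1) ^ 2)"
    unfolding SL_def QL_def OL_def
    by (intro tendsto_intros Snu_lim_pos[OF rp c1] Qnu_lim[OF rp c1] Som_lim[OF rp c1] Qom_lim[OF rp c1] Qno_lim[OF rp c1])
      (use SLp r1 in \<open>auto simp: SL_def\<close>)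
  moreover have "((x + y) / 2)^2 * (2 / (3 * SL) - \<theta> / 3 * (QL / SL ^ 2))
   + ((x + y) / 2) * ((x - y) / 2) * (2 / (r + 1) - 2 * \<theta> * (0 / (SL * (r + 1))))
   + ((x - y) / 2)^2 * \<theta> * (OL / (r + 1) ^ 2)
   = (x + y)^2 * (36 * exp (6 * \<rho> * T) * (8 * \<rho> * T + 13) - 60 * exp (3 * \<rho> * T) - 3)
               / (16 * (2 * exp (3 * \<rho> * T) * (3 * \<rho> * T + 5) - 1)^2)
             + (x^2 - y^2) / (2 * (\<rho> * T + 1))
             + (x - y)^2 / (16 * (\<rho> * T + 1)^2)"
  proof -
    have e6: "exp (6 * \<rho> * T) = E^2" unfolding E_def r_def
      by (simp add: exp_double[symmetric] power2_eq_square exp_add[symmetric] mult.assoc)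
    have e3: "exp (3 * \<rho> * T) = E" unfolding E_def r_def by (simp add: mult.assoc)
    have t1: "\<theta> / 3 * (QL / SL ^ 2) = (\<theta> * QL) / (3 * SL^2)" by simp
    have t3: "\<theta> * (OL / (r + 1) ^ 2) = (\<theta> * OL) / (r + 1)^2" by simp
    have rT: "\<rho> * T = r" unfolding r_def ..
    have "((x + y) / 2)^2 * (2 / (3 * SL) - \<theta> / 3 * (QL / SL ^ 2))
     + ((x + y) / 2) * ((x - y) / 2) * (2 / (r + 1) - 2 * \<theta> * (0 / (SL * (r + 1))))
     + ((x - y) / 2)^2 * \<theta> * (OL / (r + 1) ^ 2)
     = ((x + y) / 2)^2 * (2 / (3 * SL) - (\<theta> * QL) / (3 * SL^2))
     + ((x + y) / 2) * ((x - y) / 2) * (2 / (r + 1))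
     + ((x - y) / 2)^2 * ((\<theta> * OL) / (r + 1)^2)" by (simp add: t1 mult.assoc)
    also have "\<dots> = (x + y)^2 * (36 * E^2 * (8 * r + 13) - 60 * E - 3) / (16 * (2 * E * (3 * r + 5) - 1)^2)
             + (x^2 - y^2) / (2 * (r + 1)) + (x - y)^2 / (16 * (r + 1)^2)"
    proof -
      define G where "G = 6 * r * E + 10 * E - 1"
      have G0: "G \<noteq> 0" using Gp unfolding G_def by simp
      have E0: "E \<noteq> 0" using E1 by simp
      have G2: "2 * E * (3 * r + 5) - 1 = G" unfolding G_def by (simp add: algebra_simps)
      have sl': "SL = G / (18 * E)" unfolding sl G_def ..
      have p1: "2 / (3 * SL) = 12 * E / G" unfolding sl' using G0 E0 by (simp add: field_simps)
      have p2: "(2 * E + 1)^2 / (144 * E^2) / (3 * SL^2) = 3 * (2 * E + 1)^2 / (4 * G^2)"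
        unfolding sl' using G0 E0 by (simp add: field_simps power2_eq_square)
      have p3: "12 * E / G - 3 * (2 * E + 1)^2 / (4 * G^2) = (48 * E * G - 3 * (2 * E + 1)^2) / (4 * G^2)"
        using G0 by (simp add: field_simps power2_eq_square)
      have p4: "48 * E * G - 3 * (2 * E + 1)^2 = 36 * E^2 * (8 * r + 13) - 60 * E - 3"
        unfolding G_def by (simp add: algebra_simps power2_eq_square)
      have P: "2 / (3 * SL) - (2 * E + 1)^2 / (144 * E^2) / (3 * SL^2) = (36 * E^2 * (8 * r + 13) - 60 * E - 3) / (4 * G^2)"
        unfolding p1 p2 p3 p4 ..
      have A: "((x + y) / 2)^2 * ((36 * E^2 * (8 * r + 13) - 60 * E - 3) / (4 * G^2))
          = (x + y)^2 * (36 * E^2 * (8 * r + 13) - 60 * E - 3) / (16 * G^2)"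
        by (simp add: power_divide)
      have B: "((x + y) / 2) * ((x - y) / 2) * (2 / (r + 1)) = (x^2 - y^2) / (2 * (r + 1))"
        using rp by (simp add: field_simps power2_eq_square)
      have C: "((x - y) / 2)^2 * ((1/4) / (r + 1)^2) = (x - y)^2 / (16 * (r + 1)^2)"
        by (simp add: power_divide)
      show ?thesis unfolding ql ol P A B C G2 by simp
    qed
    also have "\<dots> = (x + y)^2 * (36 * exp (6 * \<rho> * T) * (8 * \<rho> * T + 13) - 60 * exp (3 * \<rho> * T) - 3)
               / (16 * (2 * exp (3 * \<rho> * T) * (3 * \<rho> * T + 5) - 1)^2)
             + (x^2 - y^2) / (2 * (\<rho> * T + 1))
             + (x - y)^2 / (16 * (\<rho> * T + 1)^2)"
      unfolding e6 e3 r_def by (simp add: mult.assoc)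
    finally show ?thesis .
  qed
  ultimately have L: "?F \<longlonglongrightarrow> (x + y)^2 * (36 * exp (6 * \<rho> * T) * (8 * \<rho> * T + 13) - 60 * exp (3 * \<rho> * T) - 3)
               / (16 * (2 * exp (3 * \<rho> * T) * (3 * \<rho> * T + 5) - 1)^2)
             + (x^2 - y^2) / (2 * (\<rho> * T + 1))
             + (x - y)^2 / (16 * (\<rho> * T + 1)^2)" by (rule tendsto_eq_val)
  show ?thesis by (rule lim_ev[OF eqN L])
qed


definition sp :: "nat \<Rightarrow> real" where "sp p = (-1) ^ (p + 1)"

lemma sm_par: "strict_mono (\<lambda>N::nat. 2 * N + p)"
  by (rule strict_monoI) simp

lemma par_pow: "(-1::real) ^ (2 * N + p + 1) = sp p"
  unfolding sp_def by (simp add: power_add power_mult)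

context
  fixes r :: real and p :: nat
  assumes rp: "0 < r"
begin

lemma ch: "1/2 \<le> (1/2::real)" by simp

lemma r2_half: "N > 0 \<Longrightarrow> R2 r (1/2) N = - 1 / R1 r (1/2) N"
proof -
  assume N0: "N > 0"
  note b = basics[OF rp ch N0]
  have "R1 r (1/2) N * R2 r (1/2) N = - 1"
    using r1r2[OF b(1,2) ch] unfolding R1_def R2_def by simp
  then show ?thesis using b(3) by (simp add: field_simps)
qed

lemma R2pow: assumes "N > 0" shows "R2 r (1/2) N ^ (N + 1) = (-1) ^ (N + 1) / R1p r (1/2) N"
proof -
  have "R2 r (1/2) N ^ (N + 1) = (- 1 / R1 r (1/2) N) ^ (N + 1)" using r2_half[OF assms] by simp
  also have "\<dots> = (-1) ^ (N + 1) / R1p r (1/2) N" unfolding R1p_def by (rule power_divide)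
  finally show ?thesis .
qed

abbreviation "\<sigma> \<equiv> (\<lambda>N::nat. 2 * N + p)"

lemma R2pow_s: "(\<lambda>N. R2 r (1/2) (\<sigma> N) ^ (\<sigma> N + 1)) \<longlonglongrightarrow> sp p / exp (3 * r)"
proof -
  have L: "(\<lambda>N. sp p / R1p r (1/2) (\<sigma> N)) \<longlonglongrightarrow> sp p / exp (3 * r)"
    by (intro tendsto_intros subseq_lim[OF R1p_lim[OF rp ch] sm_par]) simp
  show ?thesis
  proof (rule lim_ev[OF _ L])
    fix N :: nat assume "N > 0"
    then have "\<sigma> N > 0" by simp
    then have A: "R2 r (1/2) (\<sigma> N) ^ (\<sigma> N + 1) = (-1) ^ (\<sigma> N + 1) / R1p r (1/2) (\<sigma> N)"
      by (rule R2pow)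
    show "R2 r (1/2) (\<sigma> N) ^ (\<sigma> N + 1) = sp p / R1p r (1/2) (\<sigma> N)"
      by (simp only: A par_pow)
  qed
qed

lemma R2_lim_h: "R2 r (1/2) \<longlonglongrightarrow> -1"
  using R2_lim[OF rp ch] by simp

lemma W2S_lim_s: "(\<lambda>N. W2S r (1/2) (\<sigma> N)) \<longlonglongrightarrow> sp p / (2 * exp (3 * r))"
proof -
  have "(\<lambda>N. R2 r (1/2) (\<sigma> N) ^ (\<sigma> N + 1) / (1 - aS r (\<sigma> N) * R2 r (1/2) (\<sigma> N)))
      \<longlonglongrightarrow> (sp p / exp (3 * r)) / (1 - 1 * (-1))"
    by (intro tendsto_intros R2pow_s subseq_lim[OF aS_lim[OF rp ch] sm_par] subseq_lim[OF R2_lim_h sm_par]) simp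
  moreover have "(sp p / exp (3 * r)) / (1 - 1 * (-1)) = sp p / (2 * exp (3 * r))" by simp
  ultimately have L: "(\<lambda>N. R2 r (1/2) (\<sigma> N) ^ (\<sigma> N + 1) / (1 - aS r (\<sigma> N) * R2 r (1/2) (\<sigma> N)))
      \<longlonglongrightarrow> sp p / (2 * exp (3 * r))" by (rule tendsto_eq_val)
  then show ?thesis unfolding W2S_def w2_def R2_def .
qed

lemma G2S_lim_s: "(\<lambda>N. G2S r (1/2) (\<sigma> N)) \<longlonglongrightarrow> (sp p / exp (3 * r) - 1) / (- 1 - 1)"
  unfolding G2S_def by (intro tendsto_intros R2pow_s subseq_lim[OF R2_lim_h sm_par]) simp

lemma DL_h: "DL r (1/2) (sp p / (2 * exp (3 * r))) \<noteq> 0"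
proof -
  have "DL r (1/2) (sp p / (2 * exp (3 * r))) = (sp p / (2 * exp (3 * r)) - exp (3 * r)) / (4 * r)"
    unfolding DL_def[OF rp ch] using rp by (simp add: field_simps)
  moreover have "sp p / (2 * exp (3 * r)) < exp (3 * r)"
  proof -
    have "sp p \<le> 1" unfolding sp_def by (cases "even p") auto
    moreover have "1 < exp (3 * r)" using rp by simp
    ultimately have "sp p < 2 * exp (3 * r) * exp (3 * r)"
      by (smt (verit) one_less_exp_iff mult_le_cancel_left1 rp)
    then show ?thesis by (simp add: field_simps)
  qed
  ultimately show ?thesis using rp by simp
qed

lemma Snu_lim_h: "(\<lambda>N. Snu (aS r (\<sigma> N)) (1/2) (\<sigma> N)) \<longlonglongrightarrow>
   r / 3 + NAL r (1/2) (sp p / (2 * exp (3 * r))) * ((exp (3 * r) - 1) / (3 * r))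
   + BL r (1/2) (sp p / (2 * exp (3 * r))) * ((sp p / exp (3 * r) - 1) / (- 1 - 1))"
  by (rule Snu_lim_s[OF rp ch sm_par W2S_lim_s DL_h G2S_lim_s])

lemma qS_h: "qS r (1/2) N = - aS r N" unfolding qS_def qq_def by simp

lemma qSpow_s: "(\<lambda>N. qS r (1/2) (\<sigma> N) ^ (\<sigma> N + 1)) \<longlonglongrightarrow> sp p * exp (- r)"
proof -
  have "(\<lambda>N. sp p * aS r (\<sigma> N) * exp (- r)) \<longlonglongrightarrow> sp p * 1 * exp (- r)"
    by (intro tendsto_intros subseq_lim[OF aS_lim[OF rp ch] sm_par])
  then have L: "(\<lambda>N. sp p * aS r (\<sigma> N) * exp (- r)) \<longlonglongrightarrow> sp p * exp (- r)" by (rule tendsto_eq_val) simp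
  show ?thesis
  proof (rule lim_ev[where g="\<lambda>N. sp p * aS r (\<sigma> N) * exp (- r)", OF _ L])
    fix N :: nat assume "N > 0"
    then have N0: "\<sigma> N > 0" by simp
    have "qS r (1/2) (\<sigma> N) ^ (\<sigma> N + 1) = (-1) ^ (\<sigma> N + 1) * (aS r (\<sigma> N) * aS r (\<sigma> N) ^ (\<sigma> N))"
      unfolding qS_h by (simp add: power_minus')
    also have "\<dots> = sp p * aS r (\<sigma> N) * exp (- r)" unfolding par_pow aS_pow[OF rp ch N0] by simp
    finally show "qS r (1/2) (\<sigma> N) ^ (\<sigma> N + 1) = sp p * aS r (\<sigma> N) * exp (- r)" .
  qed
qed

lemma Som_lim_h: "(\<lambda>N. Som (aS r (\<sigma> N)) (1/2) (\<sigma> N)) \<longlonglongrightarrow> r + 1 - sp p * exp (- r)"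
proof -
  have ws: "wsS r (1/2) \<longlonglongrightarrow> 0"
  proof -
    have "wsS r (1/2) \<longlonglongrightarrow> (1 - 1) / (1/2 + 1 * (1 - 1/2))"
      unfolding wsS_def ws_def by (intro tendsto_intros aS_lim[OF rp ch]) simp
    then show ?thesis by simp
  qed
  have gm: "gamS r (1/2) \<longlonglongrightarrow> 1 / (1/2) - 0"
    unfolding gamS_def gam_def by (intro tendsto_intros ws[unfolded wsS_def]) 
  have qs: "(\<lambda>N. qS r (1/2) (\<sigma> N)) \<longlonglongrightarrow> - 1"
    unfolding qS_h using subseq_lim[OF aS_lim[OF rp ch] sm_par] by (intro tendsto_intros) simp
  have "(\<lambda>N. (real (\<sigma> N) + 1) / real (\<sigma> N) * (NaS r (\<sigma> N) / (1/2 + aS r (\<sigma> N) * (1 - 1/2))) + gamS r (1/2) (\<sigma> N) * GqS r (1/2) (\<sigma> N))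
    \<longlonglongrightarrow> 1 * (r / (1/2 + 1 * (1 - 1/2))) + (1 / (1/2) - 0) * ((sp p * exp (- r) - 1) / (- 1 - 1))"
    unfolding GqS_def
    by (intro tendsto_intros subseq_lim[OF Nfrac_lim[OF rp ch] sm_par] subseq_lim[OF NaS_lim[OF rp ch] sm_par]
        subseq_lim[OF aS_lim[OF rp ch] sm_par] subseq_lim[OF gm sm_par] qSpow_s qs) simp_all
  moreover have "1 * (r / (1/2 + 1 * (1 - 1/2))) + (1 / (1/2) - 0) * ((sp p * exp (- r) - 1) / (- 1 - 1)) = r + 1 - sp p * exp (- r)"
    by (simp add: field_simps)
  ultimately have L: "(\<lambda>N. (real (\<sigma> N) + 1) / real (\<sigma> N) * (NaS r (\<sigma> N) / (1/2 + aS r (\<sigma> N) * (1 - 1/2))) + gamS r (1/2) (\<sigma> N) * GqS r (1/2) (\<sigma> N))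
    \<longlonglongrightarrow> r + 1 - sp p * exp (- r)" by (rule tendsto_eq_val)
  show ?thesis
    by (rule lim_ev_s[OF sm_par _ L]) (rule Som_repr[OF rp ch])
qed

end


lemma part_b_gen:
  fixes \<rho> T s0 x y :: real and p :: nat
  assumes "\<rho> > 0" "T > 0"
  defines "r \<equiv> \<rho> * T"
  defines "SL \<equiv> r / 3 + NAL r (1/2) (sp p / (2 * exp (3 * r))) * ((exp (3 * r) - 1) / (3 * r))
   + BL r (1/2) (sp p / (2 * exp (3 * r))) * ((sp p / exp (3 * r) - 1) / (- 1 - 1))"
  assumes SL0: "SL \<noteq> 0"
  shows "(\<lambda>N. eq_cost \<rho> T 0 s0 x y (2 * N + p)) \<longlonglongrightarrow>
     ((x + y) / 2)^2 * (2 / (3 * SL)) + ((x + y) / 2) * ((x - y) / 2) * (2 / (r + 1 - sp p * exp (- r)))"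
proof -
  have rp: "0 < r" unfolding r_def using assms by simp
  have OL0: "r + 1 - sp p * exp (- r) \<noteq> 0"
  proof -
    have "sp p * exp (- r) \<le> exp (- r)" unfolding sp_def by (cases "even p") auto
    moreover have "exp (- r) < 1" using rp by simp
    ultimately show ?thesis using rp by linarith
  qed
  let ?F = "\<lambda>M. ((x + y) / 2)^2 * (2 / (3 * Snu (aS r M) (1/2) M)) + ((x + y) / 2) * ((x - y) / 2) * (2 / Som (aS r M) (1/2) M)"
  have eqM: "eq_cost \<rho> T 0 s0 x y M = ?F M" if "M > 0" for M
    using eq_cost_formula[OF that _ order.refl, of \<rho> T s0 x y] rp
    unfolding aS_eq r_def[symmetric] by simp
  have L: "(\<lambda>N. ?F (2 * N + p)) \<longlonglongrightarrow> ((x + y) / 2)^2 * (2 / (3 * SL)) + ((x + y) / 2) * ((x - y) / 2) * (2 / (r + 1 - sp p * exp (- r)))"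
    by (intro tendsto_intros Snu_lim_h[OF rp, of p, folded SL_def] Som_lim_h[OF rp]) (use SL0 OL0 in auto)
  show ?thesis by (rule lim_ev_s[OF sm_par eqM L])
qed

lemma SL_closed:
  fixes r :: real and p :: nat
  assumes rp: "0 < r"
  defines "E \<equiv> exp (3 * r)"
  shows "r / 3 + NAL r (1/2) (sp p / (2 * exp (3 * r))) * ((exp (3 * r) - 1) / (3 * r))
   + BL r (1/2) (sp p / (2 * exp (3 * r))) * ((sp p / exp (3 * r) - 1) / (- 1 - 1))
   = (3 * r * (2 * E^2 - sp p) + 4 * (E + sp p) * (E - 1) + 3 * (2 * E + 1) * (E - sp p)) / (9 * (2 * E^2 - sp p))"
proof -
  have ch: "1/2 \<le> (1/2::real)" by simp
  have E1: "1 < E" unfolding E_def using rp by simp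
  have s2: "sp p ^ 2 = 1" unfolding sp_def by (simp add: power_mult[symmetric] power_even_eq)
  have sle: "sp p \<le> 1" unfolding sp_def by (cases "even p") auto
  have den: "2 * E^2 - sp p > 0"
  proof -
    have "1 < E^2" using E1 by (simp add: one_less_power)
    then show ?thesis using sle by linarith
  qed
  have dl: "DL r (1/2) (sp p / (2 * E)) = (sp p - 2 * E^2) / (8 * r * E)"
    unfolding DL_def[OF rp ch] E_def[symmetric] using rp E1 by (simp add: field_simps power2_eq_square)
  have dl0: "sp p - 2 * E^2 \<noteq> 0" using den by simp
  have nal: "NAL r (1/2) (sp p / (2 * E)) = 4 * r * (E + sp p) / (3 * (2 * E^2 - sp p))"
    unfolding NAL_def[OF rp ch] E_def[symmetric] dl using rp E1 dl0 den
    by (simp add: field_simps power2_eq_square)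
  have bl: "BL r (1/2) (sp p / (2 * E)) = 2 * E * (2 * E + 1) / (3 * (2 * E^2 - sp p))"
    unfolding BL_def[OF rp ch] E_def[symmetric] dl using rp E1 dl0 den
    by (simp add: field_simps power2_eq_square)
  have g: "(sp p / E - 1) / (- 1 - 1) = (E - sp p) / (2 * E)" using E1 by (simp add: field_simps)
  define Dn where "Dn = 2 * E^2 - sp p"
  have Dn0: "Dn \<noteq> 0" unfolding Dn_def using den by simp
  have t1: "4 * r * (E + sp p) / (3 * Dn) * ((E - 1) / (3 * r)) = 4 * (E + sp p) * (E - 1) / (9 * Dn)"
    using rp Dn0 by (simp add: field_simps)
  have t2: "2 * E * (2 * E + 1) / (3 * Dn) * ((E - sp p) / (2 * E)) = (2 * E + 1) * (E - sp p) / (3 * Dn)"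
    using E1 Dn0 by (simp add: field_simps)
  have t3: "r / 3 + 4 * (E + sp p) * (E - 1) / (9 * Dn) + (2 * E + 1) * (E - sp p) / (3 * Dn)
      = (3 * r * Dn + 4 * (E + sp p) * (E - 1) + 3 * (2 * E + 1) * (E - sp p)) / (9 * Dn)"
    using Dn0 by (simp add: field_simps)
  show ?thesis unfolding E_def[symmetric] nal bl g Dn_def[symmetric] t1 t2 t3 ..
qed


lemma exp_facts:
  fixes \<rho> T :: real
  shows "exp (6 * \<rho> * T) = exp (3 * (\<rho> * T))^2" "exp (3 * \<rho> * T) = exp (3 * (\<rho> * T))"
    "exp (- \<rho> * T) = exp (- (\<rho> * T))"
  by (simp_all add: power2_eq_square exp_add[symmetric] mult.assoc)

lemma part_b_even:
  fixes \<rho> T s0 x y :: real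
  assumes "\<rho> > 0" "T > 0"
  shows "(\<lambda>N. eq_cost \<rho> T 0 s0 x y (2 * N)) \<longlonglongrightarrow>
             (x + y)^2 * (6 * exp (6 * \<rho> * T) + 3)
               / (2 * (2 * exp (6 * \<rho> * T) * (3 * \<rho> * T + 5) + exp (3 * \<rho> * T) + 3 * \<rho> * T + 7))
             + (x^2 - y^2) / (2 * (exp (- \<rho> * T) + \<rho> * T + 1))"
proof -
  define r where "r = \<rho> * T"
  have rp: "0 < r" unfolding r_def using assms by simp
  define E where "E = exp (3 * r)"
  have E1: "1 < E" unfolding E_def using rp by simp
  have s: "sp 0 = -1" unfolding sp_def by simp
  define D0 where "D0 = 2 * E^2 * (3 * r + 5) + E + 3 * r + 7"
  have D0p: "0 < D0" unfolding D0_def using rp E1 by (simp add: add_pos_pos)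
  have SLc: "r / 3 + NAL r (1/2) (sp 0 / (2 * exp (3 * r))) * ((exp (3 * r) - 1) / (3 * r))
   + BL r (1/2) (sp 0 / (2 * exp (3 * r))) * ((sp 0 / exp (3 * r) - 1) / (- 1 - 1)) = D0 / (9 * (2 * E^2 + 1))"
    unfolding SL_closed[OF rp, of 0] unfolding E_def[symmetric] s D0_def by (simp add: algebra_simps power2_eq_square)
  have "0 \<le> E^2" by simp
  then have den: "0 < 2 * E^2 + 1" by linarith
  have SL0: "D0 / (9 * (2 * E^2 + 1)) \<noteq> 0" using D0p den by simp
  have L: "(\<lambda>N. eq_cost \<rho> T 0 s0 x y (2 * N + 0)) \<longlonglongrightarrow>
     ((x + y) / 2)^2 * (2 / (3 * (D0 / (9 * (2 * E^2 + 1))))) + ((x + y) / 2) * ((x - y) / 2) * (2 / (r + 1 - sp 0 * exp (- r)))"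
    by (rule part_b_gen[OF assms, of 0 s0 x y, unfolded r_def[symmetric] SLc, OF SL0])
  have val: "((x + y) / 2)^2 * (2 / (3 * (D0 / (9 * (2 * E^2 + 1))))) + ((x + y) / 2) * ((x - y) / 2) * (2 / (r + 1 - sp 0 * exp (- r)))
     = (x + y)^2 * (6 * E^2 + 3) / (2 * D0) + (x^2 - y^2) / (2 * (exp (- r) + r + 1))"
  proof -
    have A: "((x + y) / 2)^2 * (2 / (3 * (D0 / (9 * (2 * E^2 + 1))))) = (x + y)^2 * (6 * E^2 + 3) / (2 * D0)"
      using D0p den by (simp add: field_simps power2_eq_square)
    have pos: "0 < exp (- r) + r + 1" using rp by (simp add: add_pos_pos)
    have B: "((x + y) / 2) * ((x - y) / 2) * (2 / (r + 1 - sp 0 * exp (- r))) = (x^2 - y^2) / (2 * (exp (- r) + r + 1))"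
      unfolding s using pos by (simp add: field_simps power2_eq_square)
    show ?thesis unfolding A B ..
  qed
  have tgt: "(x + y)^2 * (6 * E^2 + 3) / (2 * D0) + (x^2 - y^2) / (2 * (exp (- r) + r + 1)) =
             (x + y)^2 * (6 * exp (6 * \<rho> * T) + 3)
               / (2 * (2 * exp (6 * \<rho> * T) * (3 * \<rho> * T + 5) + exp (3 * \<rho> * T) + 3 * \<rho> * T + 7))
             + (x^2 - y^2) / (2 * (exp (- \<rho> * T) + \<rho> * T + 1))"
    unfolding exp_facts D0_def E_def r_def by (simp add: mult.assoc)
  show ?thesis using L unfolding val tgt by simp
qed

lemma part_b_odd:
  fixes \<rho> T s0 x y :: real
  assumes "\<rho> > 0" "T > 0"
  shows "(\<lambda>N. eq_cost \<rho> T 0 s0 x y (2 * N + 1)) \<longlonglongrightarrow>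
             (x + y)^2 * (6 * exp (6 * \<rho> * T) - 3)
               / (2 * (2 * exp (6 * \<rho> * T) * (3 * \<rho> * T + 5) - 3 * exp (3 * \<rho> * T) - 3 * \<rho> * T - 7))
             + (x^2 - y^2) / (2 * (- exp (- \<rho> * T) + \<rho> * T + 1))"
proof -
  define r where "r = \<rho> * T"
  have rp: "0 < r" unfolding r_def using assms by simp
  define E where "E = exp (3 * r)"
  have E1: "1 < E" unfolding E_def using rp by simp
  have s: "sp 1 = 1" unfolding sp_def by simp
  define D1 where "D1 = 2 * E^2 * (3 * r + 5) - 3 * E - 3 * r - 7"
  have D1p: "0 < D1"
  proof -
    have a: "0 < (E - 1) * (10 * E + 7)" using E1 by simp
    have "1 < E^2" using E1 by (simp add: one_less_power)
    then have b: "0 < 3 * r * (2 * E^2 - 1)" using rp by simp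
    have "D1 = (E - 1) * (10 * E + 7) + 3 * r * (2 * E^2 - 1)" unfolding D1_def by (simp add: algebra_simps power2_eq_square)
    then show ?thesis using a b by simp
  qed
  have den: "0 < 2 * E^2 - 1"
  proof -
    have "1 < E^2" using E1 by (simp add: one_less_power)
    then show ?thesis by simp
  qed
  have SLc: "r / 3 + NAL r (1/2) (sp 1 / (2 * exp (3 * r))) * ((exp (3 * r) - 1) / (3 * r))
   + BL r (1/2) (sp 1 / (2 * exp (3 * r))) * ((sp 1 / exp (3 * r) - 1) / (- 1 - 1)) = D1 / (9 * (2 * E^2 - 1))"
    unfolding SL_closed[OF rp, of 1] unfolding E_def[symmetric] s D1_def by (simp add: algebra_simps power2_eq_square)
  have SL0: "D1 / (9 * (2 * E^2 - 1)) \<noteq> 0" using D1p den by simp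
  have L: "(\<lambda>N. eq_cost \<rho> T 0 s0 x y (2 * N + 1)) \<longlonglongrightarrow>
     ((x + y) / 2)^2 * (2 / (3 * (D1 / (9 * (2 * E^2 - 1))))) + ((x + y) / 2) * ((x - y) / 2) * (2 / (r + 1 - sp 1 * exp (- r)))"
    by (rule part_b_gen[OF assms, of 1 s0 x y, unfolded r_def[symmetric] SLc, OF SL0])
  have val: "((x + y) / 2)^2 * (2 / (3 * (D1 / (9 * (2 * E^2 - 1))))) + ((x + y) / 2) * ((x - y) / 2) * (2 / (r + 1 - sp 1 * exp (- r)))
     = (x + y)^2 * (6 * E^2 - 3) / (2 * D1) + (x^2 - y^2) / (2 * (- exp (- r) + r + 1))"
  proof -
    have A: "((x + y) / 2)^2 * (2 / (3 * (D1 / (9 * (2 * E^2 - 1))))) = (x + y)^2 * (6 * E^2 - 3) / (2 * D1)"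
      using D1p den by (simp add: field_simps power2_eq_square)
    have "exp (- r) < 1" using rp by simp
    then have pos: "0 < - exp (- r) + r + 1" using rp by linarith
    have B: "((x + y) / 2) * ((x - y) / 2) * (2 / (r + 1 - sp 1 * exp (- r))) = (x^2 - y^2) / (2 * (- exp (- r) + r + 1))"
      unfolding s using pos by (simp add: field_simps power2_eq_square)
    show ?thesis unfolding A B ..
  qed
  have tgt: "(x + y)^2 * (6 * E^2 - 3) / (2 * D1) + (x^2 - y^2) / (2 * (- exp (- r) + r + 1)) =
             (x + y)^2 * (6 * exp (6 * \<rho> * T) - 3)
               / (2 * (2 * exp (6 * \<rho> * T) * (3 * \<rho> * T + 5) - 3 * exp (3 * \<rho> * T) - 3 * \<rho> * T - 7))
             + (x^2 - y^2) / (2 * (- exp (- \<rho> * T) + \<rho> * T + 1))"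
    unfolding exp_facts D1_def E_def r_def by (simp add: mult.assoc)
  show ?thesis using L unfolding val tgt .
qed

theorem theorem3p2:
  fixes \<rho> T \<theta> s0 x y :: real
  assumes "\<rho> > 0" and "T > 0" and "\<theta> \<ge> 0"
  shows "(\<theta> > 0 \<longrightarrow>
           (\<lambda>N. eq_cost \<rho> T \<theta> s0 x y N) \<longlonglongrightarrow>
             (x + y)^2 * (36 * exp (6 * \<rho> * T) * (8 * \<rho> * T + 13) - 60 * exp (3 * \<rho> * T) - 3)
               / (16 * (2 * exp (3 * \<rho> * T) * (3 * \<rho> * T + 5) - 1)^2)
             + (x^2 - y^2) / (2 * (\<rho> * T + 1))
             + (x - y)^2 / (16 * (\<rho> * T + 1)^2))
    \<and> (\<theta> = 0 \<longrightarrow>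
           (\<lambda>N. eq_cost \<rho> T \<theta> s0 x y (2 * N)) \<longlonglongrightarrow>
             (x + y)^2 * (6 * exp (6 * \<rho> * T) + 3)
               / (2 * (2 * exp (6 * \<rho> * T) * (3 * \<rho> * T + 5) + exp (3 * \<rho> * T) + 3 * \<rho> * T + 7))
             + (x^2 - y^2) / (2 * (exp (- \<rho> * T) + \<rho> * T + 1)))
    \<and> (\<theta> = 0 \<longrightarrow>
           (\<lambda>N. eq_cost \<rho> T \<theta> s0 x y (2 * N + 1)) \<longlonglongrightarrow>
             (x + y)^2 * (6 * exp (6 * \<rho> * T) - 3)
               / (2 * (2 * exp (6 * \<rho> * T) * (3 * \<rho> * T + 5) - 3 * exp (3 * \<rho> * T) - 3 * \<rho> * T - 7))
             + (x^2 - y^2) / (2 * (- exp (- \<rho> * T) + \<rho> * T + 1)))"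
  using part_a[OF assms(1,2)] part_b_even[OF assms(1,2)] part_b_odd[OF assms(1,2)] by blast


end
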